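(* Let $S$ be a 1-safe net system with transition set $T$ and let $\pi=(O,h)$, $O=(C,E,G)$, be its complete prefix unfolding. Let IMPROVED$(S,\pi)$ be the following procedure. Start with $R=\emptyset$. For each $t_1\in T$ and each $t_2\in(t_1\bullet)\bullet$: add $\langle t_1,t_2\rangle$ to $R$ if EarlyConfirm$(t_1,t_2)$ returns true, and otherwise add it if CheckByCuts$(t_1,t_2)$ returns true. Then, for each pair of events $e_1,e_2$ of $\pi$ with $e_1$ co $e_2$, add $\langle h(e_1),h(e_2)\rangle$ and $\langle h(e_2),h(e_1)\rangle$ to $R$. Return $R$. Here EarlyConfirm$(t_1,t_2)$ returns true iff there is an event $e_1$ with $h(e_1)=t_1$ such that either $e_1$ is not a cut-off event and $e_1\triangleright e_2$ for some event $e_2$ with $h(e_2)=t_2$, or $e_1$ is a cut-off event with (non-cut-off) corresponding event $e_1'$ satisfying $h(e_1'\bullet)=h(e_1\bullet)$ and $e_1'\triangleright e_2$ for some event $e_2$ with $h(e_2)=t_2$; and CheckByCuts$(t_1,t_2)$ returns true iff for some event $e_1$ with $h(e_1)=t_1$, letting $B_{prec}=e_1\bullet\cup\{c\in C\mid c\text{ co }e_1,\ h(c)\in\bullet t_2\}$, some subset $X'\subseteq B_{prec}$ that is a maximal (w.r.t. inclusion within $B_{prec}$) set of pairwise co conditions satisfies $\bullet t_2\subseteq h(X')$. Then the set $R$ returned by IMPROVED$(S,\pi)$ is exactly $\{\langle t_1,t_2\rangle\in T\times T\mid t_1<_{tar}t_2\}$.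
   Context: Petri net $N=(P,T,F)$ with pre/post-sets $\bullet x$, $x\bullet$, and for sets $Y\bullet=\bigcup_{y\in Y}y\bullet$, $\bullet Y=\bigcup_{y\in Y}\bullet y$; markings, enabling (all input places marked), firing $M'=M-\bullet t+t\bullet$; net system $S=(N,M_0)$, 1-safe if every reachable marking has at most one token per place. Transition adjacency relation: $t_1<_{tar}t_2$ iff some reachable marking $M_s$ enables $t_1$ and after firing $t_1$ from $M_s$, $t_2$ is enabled. For nodes of an occurrence net: $x<y$ iff a directed path with at least one arc from $x$ to $y$; $x\#y$ iff there are a condition $s$ and paths $s\,t_1\cdots x$, $s\,t_2\cdots y$ with $t_1\ne t_2$; $x$ co $y$ iff none of $x<y,y<x,x\#y$ (also between conditions and events). Configurations, $[e]=\{x\mid x<e\text{ or }x=e\}$, $Cut(\mathcal C)=(Min(O)\cup\mathcal C\bullet)\setminus\bullet\mathcal C$, $Mark(\mathcal C)=h(Cut(\mathcal C))$; with an adequate order $\prec$, $e$ is a cut-off event if some $e'$ has $Mark([e])=Mark([e'])$ and $[e']\prec[e]$ ($e'$ a corresponding event); the complete prefix unfolding is the greatest backward closed subnet of the unfolding containing no events after a cut-off event ($h$ maps conditions to places and events to transitions). $Max(E_0)=\{e\in E_0\mid\forall e'\in E_0:e\not<e'\}$; Max-Event Adjacency: for events $e<f$, $e\triangleright f$ iff $e\in Max(\bullet(\bullet f))$. *)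

theory Defs
  imports Main
begin

section \<open>Petri nets (places and transitions share one node type)\<close>

definition pre :: "('x \<times> 'x) set \<Rightarrow> 'x \<Rightarrow> 'x set" where
  "pre F x = {y. (y, x) \<in> F}"

definition post :: "('x \<times> 'x) set \<Rightarrow> 'x \<Rightarrow> 'x set" where
  "post F x = {y. (x, y) \<in> F}"

definition pre_set :: "('x \<times> 'x) set \<Rightarrow> 'x set \<Rightarrow> 'x set" where
  "pre_set F Y = (\<Union>y\<in>Y. pre F y)"

definition post_set :: "('x \<times> 'x) set \<Rightarrow> 'x set \<Rightarrow> 'x set" where
  "post_set F Y = (\<Union>y\<in>Y. post F y)"

definition petri_net :: "'a set \<Rightarrow> 'a set \<Rightarrow> ('a \<times> 'a) set \<Rightarrow> bool" where
  "petri_net P T F \<longleftrightarrow> finite P \<and> finite T \<and> P \<inter> T = {} \<and>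
     F \<subseteq> (P \<times> T) \<union> (T \<times> P) \<and> (\<forall>t\<in>T. pre F t \<noteq> {})"

definition net_system :: "'a set \<Rightarrow> 'a set \<Rightarrow> ('a \<times> 'a) set \<Rightarrow> ('a \<Rightarrow> nat) \<Rightarrow> bool" where
  "net_system P T F M0 \<longleftrightarrow> petri_net P T F \<and> (\<forall>p. M0 p > 0 \<longrightarrow> p \<in> P)"

definition enabled :: "'a set \<Rightarrow> ('a \<times> 'a) set \<Rightarrow> ('a \<Rightarrow> nat) \<Rightarrow> 'a \<Rightarrow> bool" where
  "enabled T F M t \<longleftrightarrow> t \<in> T \<and> (\<forall>p\<in>pre F t. M p \<ge> 1)"

definition fire :: "('a \<times> 'a) set \<Rightarrow> ('a \<Rightarrow> nat) \<Rightarrow> 'a \<Rightarrow> ('a \<Rightarrow> nat)" where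
  "fire F M t = (\<lambda>p. M p - (if p \<in> pre F t then 1 else 0) + (if p \<in> post F t then 1 else 0))"

inductive_set reach :: "'a set \<Rightarrow> ('a \<times> 'a) set \<Rightarrow> ('a \<Rightarrow> nat) \<Rightarrow> ('a \<Rightarrow> nat) set"
  for T F M0 where
    reach_init: "M0 \<in> reach T F M0"
  | reach_step: "M \<in> reach T F M0 \<Longrightarrow> enabled T F M t \<Longrightarrow> fire F M t \<in> reach T F M0"

definition one_safe :: "'a set \<Rightarrow> ('a \<times> 'a) set \<Rightarrow> ('a \<Rightarrow> nat) \<Rightarrow> bool" where
  "one_safe T F M0 \<longleftrightarrow> (\<forall>M\<in>reach T F M0. \<forall>p. M p \<le> 1)"

definition tar :: "'a set \<Rightarrow> ('a \<times> 'a) set \<Rightarrow> ('a \<Rightarrow> nat) \<Rightarrow> 'a \<Rightarrow> 'a \<Rightarrow> bool" where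
  "tar T F M0 t1 t2 \<longleftrightarrow>
     (\<exists>Ms\<in>reach T F M0. enabled T F Ms t1 \<and> enabled T F (fire F Ms t1) t2)"

definition lt :: "('n \<times> 'n) set \<Rightarrow> 'n \<Rightarrow> 'n \<Rightarrow> bool" where
  "lt G x y \<longleftrightarrow> (x, y) \<in> G\<^sup>+"

definition conflict :: "'n set \<Rightarrow> ('n \<times> 'n) set \<Rightarrow> 'n \<Rightarrow> 'n \<Rightarrow> bool" where
  "conflict Cs G x y \<longleftrightarrow> (\<exists>s\<in>Cs. \<exists>t1 t2. t1 \<noteq> t2 \<and> (s, t1) \<in> G \<and> (s, t2) \<in> G \<and>
       (t1, x) \<in> G\<^sup>* \<and> (t2, y) \<in> G\<^sup>*)"

definition co :: "'n set \<Rightarrow> 'n set \<Rightarrow> ('n \<times> 'n) set \<Rightarrow> 'n \<Rightarrow> 'n \<Rightarrow> bool" where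
  "co Cs Es G x y \<longleftrightarrow> x \<in> Cs \<union> Es \<and> y \<in> Cs \<union> Es \<and>
     \<not> lt G x y \<and> \<not> lt G y x \<and> \<not> conflict Cs G x y"

definition occ_net :: "'n set \<Rightarrow> 'n set \<Rightarrow> ('n \<times> 'n) set \<Rightarrow> bool" where
  "occ_net Cs Es G \<longleftrightarrow> Cs \<inter> Es = {} \<and> G \<subseteq> (Cs \<times> Es) \<union> (Es \<times> Cs) \<and>
     (\<forall>c\<in>Cs. \<forall>e1 e2. (e1, c) \<in> G \<and> (e2, c) \<in> G \<longrightarrow> e1 = e2) \<and>
     (\<forall>x. \<not> lt G x x) \<and>
     (\<forall>x\<in>Cs \<union> Es. finite {y. lt G y x}) \<and>
     (\<forall>x\<in>Cs \<union> Es. \<not> conflict Cs G x x)"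

definition Min_conds :: "'n set \<Rightarrow> ('n \<times> 'n) set \<Rightarrow> 'n set" where
  "Min_conds Cs G = {c\<in>Cs. pre G c = {}}"

definition config :: "'n set \<Rightarrow> 'n set \<Rightarrow> ('n \<times> 'n) set \<Rightarrow> 'n set \<Rightarrow> bool" where
  "config Cs Es G X \<longleftrightarrow> X \<subseteq> Es \<and> (\<forall>e\<in>X. \<forall>e'\<in>Es. lt G e' e \<longrightarrow> e' \<in> X) \<and>
     (\<forall>e\<in>X. \<forall>e'\<in>X. \<not> conflict Cs G e e')"

definition lconf :: "'n set \<Rightarrow> ('n \<times> 'n) set \<Rightarrow> 'n \<Rightarrow> 'n set" where
  "lconf Es G e = {x\<in>Es. lt G x e \<or> x = e}"

definition Cut :: "'n set \<Rightarrow> ('n \<times> 'n) set \<Rightarrow> 'n set \<Rightarrow> 'n set" where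
  "Cut Cs G X = (Min_conds Cs G \<union> post_set G X) - pre_set G X"

definition Mark :: "'n set \<Rightarrow> ('n \<times> 'n) set \<Rightarrow> ('n \<Rightarrow> 'a) \<Rightarrow> 'n set \<Rightarrow> 'a set" where
  "Mark Cs G h X = h ` Cut Cs G X"

definition branching_process ::
  "'a set \<Rightarrow> 'a set \<Rightarrow> ('a \<times> 'a) set \<Rightarrow> ('a \<Rightarrow> nat) \<Rightarrow>
   'n set \<Rightarrow> 'n set \<Rightarrow> ('n \<times> 'n) set \<Rightarrow> ('n \<Rightarrow> 'a) \<Rightarrow> bool" where
  "branching_process P T F M0 Cs Es G h \<longleftrightarrow> occ_net Cs Es G \<and>
     h ` Cs \<subseteq> P \<and> h ` Es \<subseteq> T \<and>
     (\<forall>e\<in>Es. bij_betw h (pre G e) (pre F (h e)) \<and> bij_betw h (post G e) (post F (h e))) \<and>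
     bij_betw h (Min_conds Cs G) {p\<in>P. M0 p \<ge> 1} \<and>
     (\<forall>e1\<in>Es. \<forall>e2\<in>Es. pre G e1 = pre G e2 \<and> h e1 = h e2 \<longrightarrow> e1 = e2)"

text \<open>The unfolding (up to isomorphism): the branching process closed under all
  possible extensions.\<close>
definition is_unfolding ::
  "'a set \<Rightarrow> 'a set \<Rightarrow> ('a \<times> 'a) set \<Rightarrow> ('a \<Rightarrow> nat) \<Rightarrow>
   'n set \<Rightarrow> 'n set \<Rightarrow> ('n \<times> 'n) set \<Rightarrow> ('n \<Rightarrow> 'a) \<Rightarrow> bool" where
  "is_unfolding P T F M0 Cs Es G h \<longleftrightarrow> branching_process P T F M0 Cs Es G h \<and>
     (\<forall>t\<in>T. \<forall>B\<subseteq>Cs. (\<forall>x\<in>B. \<forall>y\<in>B. x \<noteq> y \<longrightarrow> co Cs Es G x y) \<and>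
        bij_betw h B (pre F t) \<longrightarrow> (\<exists>e\<in>Es. pre G e = B \<and> h e = t))"

definition ext_events :: "'n set \<Rightarrow> 'n set \<Rightarrow> ('n \<times> 'n) set \<Rightarrow> 'n set \<Rightarrow> 'n set" where
  "ext_events Cs Es G X = {e\<in>Es. e \<notin> X \<and> config Cs Es G (X \<union> lconf Es G e)}"

definition up_nodes :: "'n set \<Rightarrow> 'n set \<Rightarrow> ('n \<times> 'n) set \<Rightarrow> 'n set \<Rightarrow> 'n set" where
  "up_nodes Cs Es G X = Cut Cs G X \<union> ext_events Cs Es G X \<union> post_set G (ext_events Cs Es G X)"

definition adequate_order ::
  "'n set \<Rightarrow> 'n set \<Rightarrow> ('n \<times> 'n) set \<Rightarrow> ('n \<Rightarrow> 'a) \<Rightarrow> ('n set \<Rightarrow> 'n set \<Rightarrow> bool) \<Rightarrow> bool" where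
  "adequate_order Cs Es G h prec \<longleftrightarrow>
     (let FC = {X. config Cs Es G X \<and> finite X} in
       (\<forall>X\<in>FC. \<not> prec X X) \<and>
       (\<forall>X\<in>FC. \<forall>Y\<in>FC. \<forall>Z\<in>FC. prec X Y \<and> prec Y Z \<longrightarrow> prec X Z) \<and>
       wf {(X, Y). X \<in> FC \<and> Y \<in> FC \<and> prec X Y} \<and>
       (\<forall>X\<in>FC. \<forall>Y\<in>FC. X \<subset> Y \<longrightarrow> prec X Y) \<and>
       (\<forall>X1\<in>FC. \<forall>X2\<in>FC. prec X1 X2 \<and> Mark Cs G h X1 = Mark Cs G h X2 \<longrightarrow>
          (\<forall>I. bij_betw I (up_nodes Cs Es G X1) (up_nodes Cs Es G X2) \<and>
               (\<forall>x\<in>up_nodes Cs Es G X1. h (I x) = h x) \<and>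
               (\<forall>x\<in>up_nodes Cs Es G X1. \<forall>y\<in>up_nodes Cs Es G X1.
                   (x, y) \<in> G \<longleftrightarrow> (I x, I y) \<in> G) \<longrightarrow>
             (\<forall>Ex. finite Ex \<and> Ex \<inter> X1 = {} \<and> config Cs Es G (X1 \<union> Ex) \<longrightarrow>
                prec (X1 \<union> Ex) (X2 \<union> I ` Ex)))))"

definition corresponding ::
  "'n set \<Rightarrow> 'n set \<Rightarrow> ('n \<times> 'n) set \<Rightarrow> ('n \<Rightarrow> 'a) \<Rightarrow> ('n set \<Rightarrow> 'n set \<Rightarrow> bool) \<Rightarrow> 'n \<Rightarrow> 'n \<Rightarrow> bool" where
  "corresponding Cs Es G h prec e e' \<longleftrightarrow> e \<in> Es \<and> e' \<in> Es \<and>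
     Mark Cs G h (lconf Es G e) = Mark Cs G h (lconf Es G e') \<and> prec (lconf Es G e') (lconf Es G e)"

definition cutoff ::
  "'n set \<Rightarrow> 'n set \<Rightarrow> ('n \<times> 'n) set \<Rightarrow> ('n \<Rightarrow> 'a) \<Rightarrow> ('n set \<Rightarrow> 'n set \<Rightarrow> bool) \<Rightarrow> 'n \<Rightarrow> bool" where
  "cutoff Cs Es G h prec e \<longleftrightarrow> (\<exists>e'. corresponding Cs Es G h prec e e')"

text \<open>Nodes of the complete prefix: the greatest backward closed subnet of the
  unfolding containing no events after a cut-off event.\<close>
definition prefix_nodes ::
  "'n set \<Rightarrow> 'n set \<Rightarrow> ('n \<times> 'n) set \<Rightarrow> ('n \<Rightarrow> 'a) \<Rightarrow> ('n set \<Rightarrow> 'n set \<Rightarrow> bool) \<Rightarrow> 'n set" where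
  "prefix_nodes Cs Es G h prec = \<Union>{X. X \<subseteq> Cs \<union> Es \<and>
      (\<forall>x\<in>X. \<forall>y. (y, x) \<in> G \<longrightarrow> y \<in> X) \<and>
      (\<forall>e\<in>X \<inter> Es. \<forall>e'. lt G e' e \<longrightarrow> \<not> cutoff Cs Es G h prec e')}"

definition Max_ev :: "('n \<times> 'n) set \<Rightarrow> 'n set \<Rightarrow> 'n set" where
  "Max_ev G E0 = {e\<in>E0. \<forall>e'\<in>E0. \<not> lt G e e'}"

definition max_adj :: "('n \<times> 'n) set \<Rightarrow> 'n \<Rightarrow> 'n \<Rightarrow> bool" where
  "max_adj G e f \<longleftrightarrow> lt G e f \<and> e \<in> Max_ev G (pre_set G (pre G f))"

text \<open>Here Cp, Ep, Gp are the conditions, events and arcs of the complete prefix;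
  cut-off events and corresponding events are those of the unfolding (Cs,Es,G).\<close>

definition early_confirm ::
  "'n set \<Rightarrow> 'n set \<Rightarrow> ('n \<times> 'n) set \<Rightarrow> ('n \<Rightarrow> 'a) \<Rightarrow> ('n set \<Rightarrow> 'n set \<Rightarrow> bool) \<Rightarrow>
   'n set \<Rightarrow> ('n \<times> 'n) set \<Rightarrow> 'a \<Rightarrow> 'a \<Rightarrow> bool" where
  "early_confirm Cs Es G h prec Ep Gp t1 t2 \<longleftrightarrow>
     (\<exists>e1\<in>Ep. h e1 = t1 \<and>
        ((\<not> cutoff Cs Es G h prec e1 \<and> (\<exists>e2\<in>Ep. h e2 = t2 \<and> max_adj Gp e1 e2)) \<or>
         (cutoff Cs Es G h prec e1 \<and>
           (\<exists>e1'\<in>Ep. corresponding Cs Es G h prec e1 e1' \<and> \<not> cutoff Cs Es G h prec e1' \<and>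
              h ` post Gp e1' = h ` post Gp e1 \<and>
              (\<exists>e2\<in>Ep. h e2 = t2 \<and> max_adj Gp e1' e2)))))"

definition pairwise_co :: "'n set \<Rightarrow> 'n set \<Rightarrow> ('n \<times> 'n) set \<Rightarrow> 'n set \<Rightarrow> bool" where
  "pairwise_co Cp Ep Gp X \<longleftrightarrow> (\<forall>x\<in>X. \<forall>y\<in>X. x \<noteq> y \<longrightarrow> co Cp Ep Gp x y)"

definition check_by_cuts ::
  "('a \<times> 'a) set \<Rightarrow> ('n \<Rightarrow> 'a) \<Rightarrow> 'n set \<Rightarrow> 'n set \<Rightarrow> ('n \<times> 'n) set \<Rightarrow> 'a \<Rightarrow> 'a \<Rightarrow> bool" where
  "check_by_cuts F h Cp Ep Gp t1 t2 \<longleftrightarrow>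
     (\<exists>e1\<in>Ep. h e1 = t1 \<and>
        (let Bprec = post Gp e1 \<union> {c\<in>Cp. co Cp Ep Gp c e1 \<and> h c \<in> pre F t2} in
          (\<exists>X'\<subseteq>Bprec. pairwise_co Cp Ep Gp X' \<and>
             (\<forall>Y. X' \<subset> Y \<and> Y \<subseteq> Bprec \<longrightarrow> \<not> pairwise_co Cp Ep Gp Y) \<and>
             pre F t2 \<subseteq> h ` X')))"

definition improved ::
  "'a set \<Rightarrow> ('a \<times> 'a) set \<Rightarrow>
   'n set \<Rightarrow> 'n set \<Rightarrow> ('n \<times> 'n) set \<Rightarrow> ('n \<Rightarrow> 'a) \<Rightarrow> ('n set \<Rightarrow> 'n set \<Rightarrow> bool) \<Rightarrow> ('a \<times> 'a) set" where
  "improved T F Cs Es G h prec =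
     (let X = prefix_nodes Cs Es G h prec; Cp = Cs \<inter> X; Ep = Es \<inter> X; Gp = G \<inter> (X \<times> X) in
       {(t1, t2). t1 \<in> T \<and> t2 \<in> post_set F (post F t1) \<and>
          (early_confirm Cs Es G h prec Ep Gp t1 t2 \<or> check_by_cuts F h Cp Ep Gp t1 t2)}
       \<union> {(h e1, h e2) | e1 e2. e1 \<in> Ep \<and> e2 \<in> Ep \<and> e1 \<noteq> e2 \<and> co Cp Ep Gp e1 e2}
       \<union> {(h e2, h e1) | e1 e2. e1 \<in> Ep \<and> e2 \<in> Ep \<and> e1 \<noteq> e2 \<and> co Cp Ep Gp e1 e2})"

end

theory Submission
  imports Defs
begin



locale unf =
  fixes P T :: "'a set" and F :: "('a \<times> 'a) set" and M0 :: "'a \<Rightarrow> nat"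
    and Cs Es :: "'n set" and G :: "('n \<times> 'n) set" and h :: "'n \<Rightarrow> 'a"
  assumes ns: "net_system P T F M0"
    and safe: "one_safe T F M0"
    and unf: "is_unfolding P T F M0 Cs Es G h"
begin

abbreviation "cfg X \<equiv> config Cs Es G X"
abbreviation "ind S \<equiv> (\<lambda>p. if p \<in> S then 1 else 0 :: nat)"

lemma bp: "branching_process P T F M0 Cs Es G h" using unf by (simp add: is_unfolding_def)
lemma occ: "occ_net Cs Es G" using bp by (simp add: branching_process_def)
lemma CE: "Cs \<inter> Es = {}" using occ by (simp add: occ_net_def)
lemma Gsub: "G \<subseteq> (Cs \<times> Es) \<union> (Es \<times> Cs)" using occ by (simp add: occ_net_def)
lemma uniq: "(e1, c) \<in> G \<Longrightarrow> (e2, c) \<in> G \<Longrightarrow> c \<in> Cs \<Longrightarrow> e1 = e2"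
  using occ unfolding occ_net_def by blast
lemma acyc: "(x, x) \<notin> G\<^sup>+" using occ by (simp add: occ_net_def lt_def)
lemma finpast: "x \<in> Cs \<union> Es \<Longrightarrow> finite {y. (y, x) \<in> G\<^sup>+}"
  using occ by (simp add: occ_net_def lt_def)
lemma nsc: "x \<in> Cs \<union> Es \<Longrightarrow> \<not> conflict Cs G x x" using occ by (simp add: occ_net_def)
lemma hE: "e \<in> Es \<Longrightarrow> h e \<in> T" using bp by (auto simp: branching_process_def)
lemma hC: "c \<in> Cs \<Longrightarrow> h c \<in> P" using bp by (auto simp: branching_process_def)
lemma prebij: "e \<in> Es \<Longrightarrow> bij_betw h (pre G e) (pre F (h e))"
  using bp by (simp add: branching_process_def)
lemma postbij: "e \<in> Es \<Longrightarrow> bij_betw h (post G e) (post F (h e))"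
  using bp by (simp add: branching_process_def)
lemma minbij: "bij_betw h (Min_conds Cs G) {p\<in>P. M0 p \<ge> 1}"
  using bp by (simp add: branching_process_def)
lemma nodup: "e1 \<in> Es \<Longrightarrow> e2 \<in> Es \<Longrightarrow> pre G e1 = pre G e2 \<Longrightarrow> h e1 = h e2 \<Longrightarrow> e1 = e2"
  using bp by (simp add: branching_process_def)
lemma closure: "t \<in> T \<Longrightarrow> B \<subseteq> Cs \<Longrightarrow> (\<forall>x\<in>B. \<forall>y\<in>B. x \<noteq> y \<longrightarrow> co Cs Es G x y) \<Longrightarrow>
   bij_betw h B (pre F t) \<Longrightarrow> \<exists>e\<in>Es. pre G e = B \<and> h e = t"
  using unf by (simp add: is_unfolding_def)
lemma pn: "petri_net P T F" using ns by (simp add: net_system_def)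
lemma finP: "finite P" using pn by (simp add: petri_net_def)
lemma Fsub: "F \<subseteq> (P \<times> T) \<union> (T \<times> P)" using pn by (simp add: petri_net_def)
lemma PT: "P \<inter> T = {}" using pn by (simp add: petri_net_def)
lemma preT: "t \<in> T \<Longrightarrow> pre F t \<noteq> {}" using pn by (simp add: petri_net_def)
lemma M0P: "M0 p > 0 \<Longrightarrow> p \<in> P" using ns by (simp add: net_system_def)
lemma safeM: "M \<in> reach T F M0 \<Longrightarrow> M p \<le> 1" using safe by (simp add: one_safe_def)

lemma G_CE: "(x, y) \<in> G \<Longrightarrow> (x \<in> Cs \<and> y \<in> Es) \<or> (x \<in> Es \<and> y \<in> Cs)" using Gsub by blast
lemma G_C: "(x, y) \<in> G \<Longrightarrow> x \<in> Cs \<Longrightarrow> y \<in> Es" using G_CE CE by blast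
lemma G_E: "(x, y) \<in> G \<Longrightarrow> x \<in> Es \<Longrightarrow> y \<in> Cs" using G_CE CE by blast
lemma G_C2: "(x, y) \<in> G \<Longrightarrow> y \<in> Cs \<Longrightarrow> x \<in> Es" using G_CE CE by blast
lemma G_E2: "(x, y) \<in> G \<Longrightarrow> y \<in> Es \<Longrightarrow> x \<in> Cs" using G_CE CE by blast
lemma G_nodes: "(x, y) \<in> G \<Longrightarrow> x \<in> Cs \<union> Es \<and> y \<in> Cs \<union> Es" using G_CE by blast

lemma pre_Cs: "e \<in> Es \<Longrightarrow> pre G e \<subseteq> Cs" using G_E2 by (auto simp: pre_def)
lemma post_Cs: "e \<in> Es \<Longrightarrow> post G e \<subseteq> Cs" using G_E by (auto simp: post_def)
lemma pre_ne: "e \<in> Es \<Longrightarrow> pre G e \<noteq> {}"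
  using prebij[of e] preT[OF hE[of e]] by (auto simp: bij_betw_def)

lemma trancl_last: "(x, z) \<in> G\<^sup>+ \<Longrightarrow> \<exists>y. (x, y) \<in> G\<^sup>* \<and> (y, z) \<in> G"
  by (meson tranclD2)
lemma trancl_first: "(x, z) \<in> G\<^sup>+ \<Longrightarrow> \<exists>y. (x, y) \<in> G \<and> (y, z) \<in> G\<^sup>*"
  by (meson tranclD)
lemma trancl_nodes: "(x, z) \<in> G\<^sup>+ \<Longrightarrow> x \<in> Cs \<union> Es \<and> z \<in> Cs \<union> Es"
  by (meson G_nodes tranclD tranclD2)
lemma rtr_tr: "(x, z) \<in> G\<^sup>* \<Longrightarrow> x \<noteq> z \<Longrightarrow> (x, z) \<in> G\<^sup>+"
  by (simp add: rtrancl_eq_or_trancl)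

lemma conflict_mono: "conflict Cs G x y \<Longrightarrow> (x, x') \<in> G\<^sup>* \<Longrightarrow> (y, y') \<in> G\<^sup>* \<Longrightarrow> conflict Cs G x' y'"
  unfolding conflict_def by (meson rtrancl_trans)
lemma conflict_sym: "conflict Cs G x y \<Longrightarrow> conflict Cs G y x"
  unfolding conflict_def by metis
lemma conflict_I: "s \<in> Cs \<Longrightarrow> t1 \<noteq> t2 \<Longrightarrow> (s, t1) \<in> G \<Longrightarrow> (s, t2) \<in> G \<Longrightarrow>
   (t1, x) \<in> G\<^sup>* \<Longrightarrow> (t2, y) \<in> G\<^sup>* \<Longrightarrow> conflict Cs G x y"
  unfolding conflict_def by blast

lemma path_into_cond: "(x, c) \<in> G\<^sup>+ \<Longrightarrow> (g, c) \<in> G \<Longrightarrow> c \<in> Cs \<Longrightarrow> (x, g) \<in> G\<^sup>*"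
  using trancl_last uniq by blast

end


context unf begin

lemma cfg_sub: "cfg K \<Longrightarrow> K \<subseteq> Es" by (simp add: config_def)
lemma cfg_down: "cfg K \<Longrightarrow> f \<in> K \<Longrightarrow> e' \<in> Es \<Longrightarrow> (e', f) \<in> G\<^sup>+ \<Longrightarrow> e' \<in> K"
  by (simp add: config_def lt_def)
lemma cfg_down_rt: "cfg K \<Longrightarrow> f \<in> K \<Longrightarrow> e' \<in> Es \<Longrightarrow> (e', f) \<in> G\<^sup>* \<Longrightarrow> e' \<in> K"
  using cfg_down rtr_tr by blast
lemma cfg_nc: "cfg K \<Longrightarrow> e \<in> K \<Longrightarrow> f \<in> K \<Longrightarrow> \<not> conflict Cs G e f"
  by (simp add: config_def)

lemma Min_Cs: "Min_conds Cs G \<subseteq> Cs" by (auto simp: Min_conds_def)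
lemma cut_Cs: "cfg K \<Longrightarrow> Cut Cs G K \<subseteq> Cs"
  using Min_Cs post_Cs cfg_sub by (fastforce simp: Cut_def post_set_def)

lemma cut_pred: assumes "cfg K" "c \<in> Cut Cs G K" "(x, c) \<in> G\<^sup>+" "x \<in> Es"
  shows "x \<in> K"
proof -
  obtain g where g: "(x, g) \<in> G\<^sup>*" "(g, c) \<in> G" using trancl_last[OF assms(3)] by blast
  have cC: "c \<in> Cs" using cut_Cs assms by blast
  have "c \<notin> Min_conds Cs G" using g(2) by (auto simp: Min_conds_def pre_def)
  then obtain g' where "g' \<in> K" "c \<in> post G g'" using assms(2) by (auto simp: Cut_def post_set_def)
  then have "g' = g" using uniq[OF _ g(2) cC] by (simp add: post_def)
  then show ?thesis using cfg_down_rt[OF assms(1) _ assms(4) g(1)] \<open>g' \<in> K\<close> by simp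
qed

lemma cut_notpre: "c \<in> Cut Cs G K \<Longrightarrow> f \<in> K \<Longrightarrow> c \<in> pre G f \<Longrightarrow> False"
  by (auto simp: Cut_def pre_set_def)

lemma cut_co: assumes K: "cfg K" and c: "c \<in> Cut Cs G K" and d: "d \<in> Cut Cs G K" and ne: "c \<noteq> d"
  shows "co Cs Es G c d"
proof -
  have cC: "c \<in> Cs" and dC: "d \<in> Cs" using cut_Cs K c d by auto
  have nlt: "(x, y) \<notin> G\<^sup>+" if "x \<in> Cut Cs G K" "y \<in> Cut Cs G K" for x y
  proof
    assume xy: "(x, y) \<in> G\<^sup>+"
    obtain f where f: "(x, f) \<in> G" "(f, y) \<in> G\<^sup>*" using trancl_first[OF xy] by blast
    have xC: "x \<in> Cs" using cut_Cs K that by auto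
    have fE: "f \<in> Es" using G_C[OF f(1) xC] .
    have yC: "y \<in> Cs" using cut_Cs K that by auto
    have "f \<noteq> y" using fE yC CE by auto
    then have "(f, y) \<in> G\<^sup>+" using rtr_tr f(2) by blast
    then have "f \<in> K" using cut_pred[OF K that(2) _ fE] by blast
    then show False using cut_notpre[OF that(1) _] f(1) by (auto simp: pre_def)
  qed
  have ncf: "\<not> conflict Cs G c d"
  proof
    assume "conflict Cs G c d"
    then obtain s t1 t2 where st: "s \<in> Cs" "t1 \<noteq> t2" "(s, t1) \<in> G" "(s, t2) \<in> G"
      "(t1, c) \<in> G\<^sup>*" "(t2, d) \<in> G\<^sup>*" unfolding conflict_def by blast
    have t1E: "t1 \<in> Es" and t2E: "t2 \<in> Es" using G_C st by auto
    have "(t1, c) \<in> G\<^sup>+" using rtr_tr st(5) t1E cC CE by blast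
    then have t1K: "t1 \<in> K" using cut_pred[OF K c _ t1E] by blast
    have "(t2, d) \<in> G\<^sup>+" using rtr_tr st(6) t2E dC CE by blast
    then have t2K: "t2 \<in> K" using cut_pred[OF K d _ t2E] by blast
    have "conflict Cs G t1 t2" using conflict_I[OF st(1-4)] by blast
    then show False using cfg_nc[OF K t1K t2K] by simp
  qed
  show ?thesis using nlt[OF c d] nlt[OF d c] ncf cC dC by (simp add: co_def lt_def)
qed

lemma lconf_cfg: assumes "e \<in> Es" shows "cfg (lconf Es G e)" "finite (lconf Es G e)" "e \<in> lconf Es G e"
proof -
  show "cfg (lconf Es G e)" unfolding config_def lconf_def lt_def
  proof (intro conjI ballI)
    fix x y assume x: "x \<in> {x \<in> Es. (x, e) \<in> G\<^sup>+ \<or> x = e}" and y: "y \<in> {x \<in> Es. (x, e) \<in> G\<^sup>+ \<or> x = e}"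
    have "(x, e) \<in> G\<^sup>*" "(y, e) \<in> G\<^sup>*" using x y by auto
    then show "\<not> conflict Cs G x y" using nsc[of e] assms conflict_mono by blast
  qed (auto intro: trancl_trans)
  have "lconf Es G e \<subseteq> insert e {y. (y, e) \<in> G\<^sup>+}" by (auto simp: lconf_def lt_def)
  then show "finite (lconf Es G e)" using finpast[of e] assms finite_subset by auto
  show "e \<in> lconf Es G e" using assms by (simp add: lconf_def)
qed

lemma lconf_max: "e \<in> Es \<Longrightarrow> f \<in> lconf Es G e \<Longrightarrow> (e, f) \<notin> G\<^sup>+"
  using acyc by (auto simp: lconf_def lt_def dest: trancl_trans)

lemma rm_max_cfg: assumes K: "cfg K" and e: "e \<in> K" and mx: "\<forall>f\<in>K. (e, f) \<notin> G\<^sup>+"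
  shows "cfg (K - {e})"
  unfolding config_def
proof (intro conjI ballI impI)
  show "K - {e} \<subseteq> Es" using cfg_sub K by auto
next
  fix x e' assume x: "x \<in> K - {e}" and "e' \<in> Es" and "lt G e' x"
  then have "e' \<in> K" using cfg_down[OF K] by (auto simp: lt_def)
  moreover have "e' \<noteq> e" using mx x \<open>lt G e' x\<close> by (auto simp: lt_def)
  ultimately show "e' \<in> K - {e}" by simp
next
  fix x y assume "x \<in> K - {e}" "y \<in> K - {e}" then show "\<not> conflict Cs G x y" using cfg_nc K by auto
qed

lemma rm_max_pre: assumes K: "cfg K" and e: "e \<in> K" and mx: "\<forall>f\<in>K. (e, f) \<notin> G\<^sup>+"
  shows "pre G e \<subseteq> Cut Cs G (K - {e})"
proof
  fix c assume c: "c \<in> pre G e"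
  have eE: "e \<in> Es" using K e cfg_sub by auto
  have cC: "c \<in> Cs" using pre_Cs[OF eE] c by auto
  have ce: "(c, e) \<in> G" using c by (simp add: pre_def)
  have A: "c \<in> Min_conds Cs G \<union> post_set G (K - {e})"
  proof (cases "pre G c = {}")
    case True then show ?thesis using cC by (simp add: Min_conds_def)
  next
    case False
    then obtain g where g: "(g, c) \<in> G" by (auto simp: pre_def)
    have gE: "g \<in> Es" using G_C2[OF g cC] .
    have "(g, e) \<in> G\<^sup>+" using g ce by auto
    then have "g \<in> K" using cfg_down[OF K e gE] by simp
    moreover have "g \<noteq> e" using \<open>(g, e) \<in> G\<^sup>+\<close> acyc by auto
    ultimately show ?thesis using g by (auto simp: post_set_def post_def)
  qed
  have B: "c \<notin> pre_set G (K - {e})"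
  proof
    assume "c \<in> pre_set G (K - {e})"
    then obtain f where f: "f \<in> K" "f \<noteq> e" "(c, f) \<in> G" by (auto simp: pre_set_def pre_def)
    have "conflict Cs G e f" using conflict_I[OF cC _ ce f(3)] f(2) by blast
    then show False using cfg_nc[OF K e f(1)] by simp
  qed
  show "c \<in> Cut Cs G (K - {e})" using A B by (simp add: Cut_def)
qed

lemma rm_max_cut: assumes K: "cfg K" and e: "e \<in> K" and mx: "\<forall>f\<in>K. (e, f) \<notin> G\<^sup>+"
  shows "Cut Cs G K = (Cut Cs G (K - {e}) - pre G e) \<union> post G e"
proof -
  have eE: "e \<in> Es" using K e cfg_sub by auto
  have K': "K = insert e (K - {e})" using e by auto
  have ps: "post_set G K = post_set G (K - {e}) \<union> post G e"
    using e by (auto simp: post_set_def)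
  have prs: "pre_set G K = pre_set G (K - {e}) \<union> pre G e"
    using e by (auto simp: pre_set_def)
  have d1: "post G e \<inter> pre_set G (K - {e}) = {}"
  proof -
    { fix d f assume "d \<in> post G e" "f \<in> K - {e}" "d \<in> pre G f"
      then have "(e, f) \<in> G\<^sup>+" by (auto simp: post_def pre_def)
      then have False using mx \<open>f \<in> K - {e}\<close> by auto }
    then show ?thesis by (auto simp: pre_set_def)
  qed
  have d2: "post G e \<inter> pre G e = {}" using acyc
    by (auto simp: post_def pre_def) (meson trancl.simps trancl_into_trancl)
  have d3: "post G e \<inter> Min_conds Cs G = {}" by (auto simp: post_def Min_conds_def pre_def)
  show ?thesis unfolding Cut_def ps prs using d1 d2 d3 by blast
qed

lemma ext_past: assumes C: "cfg C" and eE: "e \<in> Es" and pe: "pre G e \<subseteq> Cut Cs G C"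
   and f: "(f, e) \<in> G\<^sup>+" and fE: "f \<in> Es" shows "f \<in> C"
proof -
  obtain c where c: "(f, c) \<in> G\<^sup>*" "(c, e) \<in> G" using trancl_last[OF f] by blast
  have cC: "c \<in> Cs" using G_E2[OF c(2) eE] .
  have "c \<in> Cut Cs G C" using pe c(2) by (auto simp: pre_def)
  moreover have "(f, c) \<in> G\<^sup>+" using rtr_tr c(1) fE cC CE by blast
  ultimately show ?thesis using cut_pred[OF C] fE by blast
qed

lemma ext_notin: assumes C: "cfg C" and eE: "e \<in> Es" and pe: "pre G e \<subseteq> Cut Cs G C"
  shows "e \<notin> C"
proof
  assume "e \<in> C"
  obtain c where "c \<in> pre G e" using pre_ne[OF eE] by blast
  then show False using cut_notpre[of c C e] pe \<open>e \<in> C\<close> by auto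
qed

lemma ext_cfg: assumes C: "cfg C" and eE: "e \<in> Es" and pe: "pre G e \<subseteq> Cut Cs G C"
  shows "cfg (insert e C)"
  unfolding config_def
proof (intro conjI ballI impI)
  show "insert e C \<subseteq> Es" using cfg_sub C eE by auto
next
  fix x e' assume x: "x \<in> insert e C" and e': "e' \<in> Es" and "lt G e' x"
  then show "e' \<in> insert e C" using ext_past[OF C eE pe] cfg_down[OF C] by (auto simp: lt_def)
next
  have one: "\<not> conflict Cs G e f" if f: "f \<in> C" for f
  proof
    assume "conflict Cs G e f"
    then obtain s t1 t2 where st: "s \<in> Cs" "t1 \<noteq> t2" "(s, t1) \<in> G" "(s, t2) \<in> G"
      "(t1, e) \<in> G\<^sup>*" "(t2, f) \<in> G\<^sup>*" unfolding conflict_def by blast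
    have t1E: "t1 \<in> Es" and t2E: "t2 \<in> Es" using G_C st by auto
    have t2C: "t2 \<in> C" using cfg_down_rt[OF C f t2E st(6)] .
    show False
    proof (cases "t1 = e")
      case True
      then have "s \<in> Cut Cs G C" using pe st(3) by (auto simp: pre_def)
      then show False using cut_notpre[OF _ t2C] st(4) by (auto simp: pre_def)
    next
      case False
      then have "t1 \<in> C" using ext_past[OF C eE pe _ t1E] rtr_tr[OF st(5)] by blast
      then show False using cfg_nc[OF C _ t2C] conflict_I[OF st(1-4)] by blast
    qed
  qed
  fix x y assume x: "x \<in> insert e C" and y: "y \<in> insert e C"
  show "\<not> conflict Cs G x y"
    using x y one cfg_nc[OF C] nsc[of e] eE conflict_sym by blast
qed

lemma ext_max: assumes C: "cfg C" and eE: "e \<in> Es" and pe: "pre G e \<subseteq> Cut Cs G C"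
  shows "\<forall>f\<in>insert e C. (e, f) \<notin> G\<^sup>+"
  using cfg_down[OF C _ eE] ext_notin[OF C eE pe] acyc by blast

lemma ext_cut: assumes C: "cfg C" and eE: "e \<in> Es" and pe: "pre G e \<subseteq> Cut Cs G C"
  shows "Cut Cs G (insert e C) = (Cut Cs G C - pre G e) \<union> post G e"
proof -
  have "insert e C - {e} = C" using ext_notin[OF C eE pe] by auto
  then show ?thesis using rm_max_cut[OF ext_cfg[OF C eE pe] _ ext_max[OF C eE pe]] by simp
qed

lemma finite_max: assumes "finite K" "K \<noteq> {}" shows "\<exists>e\<in>K. \<forall>f\<in>K. (e, f) \<notin> G\<^sup>+"
  using assms
proof (induction K rule: finite_ne_induct)
  case (singleton x) then show ?case using acyc by auto
next
  case (insert x K)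
  then obtain m where m: "m \<in> K" "\<forall>f\<in>K. (m, f) \<notin> G\<^sup>+" by blast
  show ?case
  proof (cases "(m, x) \<in> G\<^sup>+")
    case True
    then have "\<forall>f\<in>insert x K. (x, f) \<notin> G\<^sup>+" using m acyc by (auto dest: trancl_trans)
    then show ?thesis by blast
  next
    case False then show ?thesis using m by auto
  qed
qed

end


context unf begin

lemma cut_empty: "Cut Cs G {} = Min_conds Cs G" by (simp add: Cut_def post_set_def pre_set_def)

lemma M0_ind: "M0 = ind (h ` Cut Cs G {})"
proof
  fix p
  have le: "M0 p \<le> 1" using safeM[OF reach_init] .
  have img: "h ` Cut Cs G {} = {p\<in>P. M0 p \<ge> 1}" using minbij cut_empty by (simp add: bij_betw_def)
  show "M0 p = ind (h ` Cut Cs G {}) p" unfolding img using le M0P[of p] by auto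
qed

lemma fire_step:
  assumes C: "cfg C" and eE: "e \<in> Es" and pe: "pre G e \<subseteq> Cut Cs G C"
    and inj: "inj_on h (Cut Cs G C)" and R: "ind (h ` Cut Cs G C) \<in> reach T F M0"
  shows "enabled T F (ind (h ` Cut Cs G C)) (h e)"
    and "fire F (ind (h ` Cut Cs G C)) (h e) = ind (h ` Cut Cs G (insert e C))"
    and "inj_on h (Cut Cs G (insert e C))"
proof -
  define S where "S = h ` Cut Cs G C"
  have B: "pre F (h e) = h ` pre G e" using prebij[OF eE] by (simp add: bij_betw_def)
  have A: "post F (h e) = h ` post G e" using postbij[OF eE] by (simp add: bij_betw_def)
  have BS: "h ` pre G e \<subseteq> S" using pe S_def by auto
  show en: "enabled T F (ind (h ` Cut Cs G C)) (h e)"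
    unfolding enabled_def using hE[OF eE] B BS S_def by auto
  define M' where "M' = fire F (ind S) (h e)"
  have M'R: "M' \<in> reach T F M0" unfolding M'_def S_def using reach_step[OF R en] .
  have key: "p \<notin> S - h ` pre G e" if "p \<in> h ` post G e" for p
  proof
    assume "p \<in> S - h ` pre G e"
    then have "M' p = 2" using that A B unfolding M'_def fire_def by auto
    then show False using safeM[OF M'R, of p] by simp
  qed
  have cut': "Cut Cs G (insert e C) = (Cut Cs G C - pre G e) \<union> post G e" using ext_cut[OF C eE pe] .
  have imgd: "h ` (Cut Cs G C - pre G e) = S - h ` pre G e"
    using inj_on_image_set_diff[OF inj _ pe] S_def by simp
  have img: "h ` Cut Cs G (insert e C) = (S - h ` pre G e) \<union> h ` post G e"
    using cut' imgd by (simp add: image_Un)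
  have "M' = ind (h ` Cut Cs G (insert e C))"
  proof
    fix p
    show "M' p = ind (h ` Cut Cs G (insert e C)) p"
      unfolding img M'_def fire_def using key[of p] BS A B by auto
  qed
  then show "fire F (ind (h ` Cut Cs G C)) (h e) = ind (h ` Cut Cs G (insert e C))"
    using M'_def S_def by simp
  have injpost: "inj_on h (post G e)" using postbij[OF eE] by (simp add: bij_betw_def)
  have inj1: "inj_on h (Cut Cs G C - pre G e)" using inj by (rule inj_on_subset) auto
  show "inj_on h (Cut Cs G (insert e C))" unfolding cut' inj_on_Un
  proof (intro conjI inj1 injpost)
    show "h ` (Cut Cs G C - pre G e - post G e) \<inter> h ` (post G e - (Cut Cs G C - pre G e)) = {}"
      using key imgd by blast
  qed
qed

lemma cfg_marking: "finite K \<Longrightarrow> cfg K \<Longrightarrow> inj_on h (Cut Cs G K) \<and> ind (h ` Cut Cs G K) \<in> reach T F M0"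
proof (induction K rule: finite_remove_induct)
  case empty
  have "inj_on h (Cut Cs G {})" using minbij cut_empty by (simp add: bij_betw_def)
  moreover have "ind (h ` Cut Cs G {}) \<in> reach T F M0" using M0_ind reach_init by metis
  ultimately show ?case by simp
next
  case (remove K)
  obtain e where e: "e \<in> K" "\<forall>f\<in>K. (e, f) \<notin> G\<^sup>+" using finite_max[OF remove(1,2)] by blast
  have K': "cfg (K - {e})" using rm_max_cfg[OF remove(5) e] .
  have IH: "inj_on h (Cut Cs G (K - {e})) \<and> ind (h ` Cut Cs G (K - {e})) \<in> reach T F M0"
    using remove(4)[OF e(1) K'] .
  have pe: "pre G e \<subseteq> Cut Cs G (K - {e})" using rm_max_pre[OF remove(5) e] .
  have eE: "e \<in> Es" using e(1) cfg_sub[OF remove(5)] by auto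
  have KK: "insert e (K - {e}) = K" using e(1) by auto
  show ?case using fire_step[OF K' eE pe] IH reach_step[of _ T F M0] KK by metis
qed

lemma ext_exists: assumes K: "cfg K" and inj: "inj_on h (Cut Cs G K)" and t: "t \<in> T"
  and sub: "pre F t \<subseteq> h ` Cut Cs G K"
  shows "\<exists>e\<in>Es. h e = t \<and> pre G e = Cut Cs G K \<inter> h -` pre F t"
proof -
  define B where "B = Cut Cs G K \<inter> h -` pre F t"
  have BC: "B \<subseteq> Cs" using cut_Cs[OF K] B_def by auto
  have co: "\<forall>x\<in>B. \<forall>y\<in>B. x \<noteq> y \<longrightarrow> co Cs Es G x y" using cut_co[OF K] B_def by auto
  have "bij_betw h B (pre F t)" unfolding bij_betw_def
  proof
    show "inj_on h B" by (rule inj_on_subset[OF inj]) (auto simp: B_def)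
    show "h ` B = pre F t" using sub B_def by auto
  qed
  then obtain e where "e \<in> Es" "pre G e = B" "h e = t" using closure[OF t BC co] by blast
  then show ?thesis using B_def by auto
qed

lemma reach_cfg: "M \<in> reach T F M0 \<Longrightarrow> \<exists>K. finite K \<and> cfg K \<and> M = ind (h ` Cut Cs G K)"
proof (induction rule: reach.induct)
  case reach_init
  have "cfg {}" by (simp add: config_def)
  then show ?case using M0_ind by blast
next
  case (reach_step M t)
  then obtain K where K: "finite K" "cfg K" "M = ind (h ` Cut Cs G K)" by blast
  have inj: "inj_on h (Cut Cs G K)" using cfg_marking K by blast
  have tT: "t \<in> T" using reach_step(2) by (simp add: enabled_def)
  have sub: "pre F t \<subseteq> h ` Cut Cs G K" using reach_step(2) K(3)
    by (auto simp: enabled_def split: if_splits)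
  obtain e where e: "e \<in> Es" "h e = t" "pre G e = Cut Cs G K \<inter> h -` pre F t"
    using ext_exists[OF K(2) inj tT sub] by blast
  have pe: "pre G e \<subseteq> Cut Cs G K" using e by auto
  have "fire F M t = ind (h ` Cut Cs G (insert e K))"
    using fire_step(2)[OF K(2) e(1) pe inj] K(3) e(2) cfg_marking K by blast
  moreover have "cfg (insert e K)" using ext_cfg[OF K(2) e(1) pe] .
  ultimately show ?case using K(1) by blast
qed

lemma tar_from_cfg: assumes K: "finite K" "cfg K" and e: "e \<in> K" "\<forall>f\<in>K. (e, f) \<notin> G\<^sup>+"
  and t: "t \<in> T" and sub: "pre F t \<subseteq> h ` Cut Cs G K"
  shows "tar T F M0 (h e) t"
proof -
  have K': "cfg (K - {e})" using rm_max_cfg[OF K(2) e] .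
  have fK': "finite (K - {e})" using K(1) by simp
  have pe: "pre G e \<subseteq> Cut Cs G (K - {e})" using rm_max_pre[OF K(2) e] .
  have eE: "e \<in> Es" using e(1) cfg_sub[OF K(2)] by auto
  have KK: "insert e (K - {e}) = K" using e(1) by auto
  have m: "inj_on h (Cut Cs G (K - {e}))" "ind (h ` Cut Cs G (K - {e})) \<in> reach T F M0"
    using cfg_marking[OF fK' K'] by auto
  note fs = fire_step[OF K' eE pe m]
  have "enabled T F (fire F (ind (h ` Cut Cs G (K - {e}))) (h e)) t"
    using fs(2) KK sub t by (auto simp: enabled_def)
  then show ?thesis unfolding tar_def using fs(1) m(2) by blast
qed

end


context unf begin

inductive_set Rel :: "'n set \<Rightarrow> 'n set \<Rightarrow> ('n \<times> 'n) set" for X1 X2 where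
  base: "c \<in> Cut Cs G X1 \<Longrightarrow> d \<in> Cut Cs G X2 \<Longrightarrow> h c = h d \<Longrightarrow> (c, d) \<in> Rel X1 X2"
| ev: "f \<in> ext_events Cs Es G X1 \<Longrightarrow> g \<in> ext_events Cs Es G X2 \<Longrightarrow> h f = h g \<Longrightarrow>
     \<forall>c\<in>pre G f. \<exists>d\<in>pre G g. (c, d) \<in> Rel X1 X2 \<Longrightarrow>
     \<forall>d\<in>pre G g. \<exists>c\<in>pre G f. (c, d) \<in> Rel X1 X2 \<Longrightarrow> (f, g) \<in> Rel X1 X2"
| post: "(f, g) \<in> Rel X1 X2 \<Longrightarrow> f \<in> Es \<Longrightarrow> c \<in> post G f \<Longrightarrow> d \<in> post G g \<Longrightarrow> h c = h d \<Longrightarrow>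
     (c, d) \<in> Rel X1 X2"

definition "good X1 X2 \<longleftrightarrow> finite X1 \<and> cfg X1 \<and> finite X2 \<and> cfg X2 \<and> h ` Cut Cs G X1 = h ` Cut Cs G X2"

lemma good_sym: "good X1 X2 \<Longrightarrow> good X2 X1" by (auto simp: good_def)

lemma ext_Es: "ext_events Cs Es G X \<subseteq> Es" by (auto simp: ext_events_def)

lemma Rel_h: "(x, y) \<in> Rel X1 X2 \<Longrightarrow> h x = h y"
  by (induction rule: Rel.induct) auto

lemma Rel_node: assumes g: "good X1 X2" shows "(x, y) \<in> Rel X1 X2 \<Longrightarrow>
   (x \<in> Cs \<and> y \<in> Cs) \<or> (x \<in> ext_events Cs Es G X1 \<and> y \<in> ext_events Cs Es G X2)"
proof (induction rule: Rel.induct)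
  case (base c d) then show ?case using cut_Cs g by (auto simp: good_def)
next
  case (ev f g) then show ?case by auto
next
  case (post f g c d)
  then have "g \<in> Es" using ext_Es CE by auto
  then show ?case using post_Cs post by auto
qed

lemma Rel_ev: "good X1 X2 \<Longrightarrow> (x, y) \<in> Rel X1 X2 \<Longrightarrow> x \<in> Es \<Longrightarrow>
   x \<in> ext_events Cs Es G X1 \<and> y \<in> ext_events Cs Es G X2"
  using Rel_node CE by blast

lemma Rel_sym: assumes g: "good X1 X2" shows "(x, y) \<in> Rel X1 X2 \<Longrightarrow> (y, x) \<in> Rel X2 X1"
proof (induction rule: Rel.induct)
  case (base c d) then show ?case by (simp add: Rel.base)
next
  case (ev f g1)
  show ?case
  proof (rule Rel.ev)
    show "\<forall>c\<in>pre G g1. \<exists>d\<in>pre G f. (c, d) \<in> Rel X2 X1" using ev(5) by blast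
    show "\<forall>d\<in>pre G f. \<exists>c\<in>pre G g1. (c, d) \<in> Rel X2 X1" using ev(4) by blast
  qed (use ev in auto)
next
  case (post f g1 c d)
  then have "g1 \<in> Es" using Rel_ev[OF g] ext_Es by blast
  show ?case by (rule Rel.post[of g1 f]) (use post \<open>g1 \<in> Es\<close> in auto)
qed

lemma cut_post_ext: assumes X: "cfg X" and c: "c \<in> Cut Cs G X" and f: "f \<in> ext_events Cs Es G X"
  and cf: "c \<in> post G f" shows False
proof -
  have fc: "(f, c) \<in> G" using cf by (simp add: post_def)
  have cC: "c \<in> Cs" using cut_Cs X c by auto
  have "c \<notin> Min_conds Cs G" using fc by (auto simp: Min_conds_def pre_def)
  then obtain g where "g \<in> X" "(g, c) \<in> G" using c by (auto simp: Cut_def post_set_def post_def)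
  then have "f \<in> X" using uniq[OF fc _ cC] by auto
  then show False using f by (simp add: ext_events_def)
qed

lemma Rel_cond: assumes g: "good X1 X2" and r: "(c, d) \<in> Rel X1 X2" and cC: "c \<in> Cs"
  shows "(c \<in> Cut Cs G X1 \<and> d \<in> Cut Cs G X2) \<or> (\<exists>f g. (f, g) \<in> Rel X1 X2 \<and>
     f \<in> ext_events Cs Es G X1 \<and> g \<in> ext_events Cs Es G X2 \<and> c \<in> post G f \<and> d \<in> post G g)"
  using r
proof (cases rule: Rel.cases)
  case base then show ?thesis by auto
next
  case ev
  then have "c \<in> Es" using ext_Es by blast
  then show ?thesis using cC CE by blast
next
  case (post f g') then show ?thesis using Rel_ev[OF g] by blast
qed

lemma Rel_evc: assumes g: "good X1 X2" and r: "(f, g) \<in> Rel X1 X2" and fE: "f \<in> Es"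
  shows "(\<forall>c\<in>pre G f. \<exists>d\<in>pre G g. (c, d) \<in> Rel X1 X2) \<and> (\<forall>d\<in>pre G g. \<exists>c\<in>pre G f. (c, d) \<in> Rel X1 X2)"
  using r
proof (cases rule: Rel.cases)
  case base then show ?thesis using cut_Cs g fE CE by (auto simp: good_def)
next
  case ev then show ?thesis by auto
next
  case (post f' g') then show ?thesis using post_Cs fE CE by auto
qed

lemma Rel_fun: assumes g: "good X1 X2" shows "(x, y) \<in> Rel X1 X2 \<Longrightarrow> (x, y') \<in> Rel X1 X2 \<Longrightarrow> y' = y"
proof (induction arbitrary: y' rule: Rel.induct)
  case (base c d)
  have cC: "c \<in> Cs" using cut_Cs g base by (auto simp: good_def)
  from Rel_cond[OF g base(4) cC] show ?case
  proof
    assume "c \<in> Cut Cs G X1 \<and> y' \<in> Cut Cs G X2"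
    moreover have "inj_on h (Cut Cs G X2)" using cfg_marking g by (auto simp: good_def)
    ultimately show ?thesis using Rel_h[OF base(4)] base(3,2) by (auto dest: inj_onD)
  next
    assume "\<exists>f g. (f, g) \<in> Rel X1 X2 \<and> f \<in> ext_events Cs Es G X1 \<and> g \<in> ext_events Cs Es G X2 \<and>
      c \<in> post G f \<and> y' \<in> post G g"
    then show ?thesis using cut_post_ext[OF _ base(1)] g by (auto simp: good_def)
  qed
next
  case (ev f g1)
  have fE: "f \<in> Es" using ev(1) ext_Es by auto
  have g'E: "y' \<in> ext_events Cs Es G X2" using Rel_ev[OF g ev(6) fE] by simp
  note rs = Rel_evc[OF g ev(6) fE]
  have "pre G y' = pre G g1"
  proof
    show "pre G y' \<subseteq> pre G g1" using rs ev(4) by blast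
    show "pre G g1 \<subseteq> pre G y'"
    proof
      fix d assume "d \<in> pre G g1"
      then obtain c where c: "c \<in> pre G f" "(c, d) \<in> Rel X1 X2" "\<forall>x. (c, x) \<in> Rel X1 X2 \<longrightarrow> x = d"
        using ev(5) by blast
      then obtain d' where "d' \<in> pre G y'" "(c, d') \<in> Rel X1 X2" using rs by blast
      then show "d \<in> pre G y'" using c(3) by auto
    qed
  qed
  moreover have "h y' = h g1" using Rel_h[OF ev(6)] ev(3) by simp
  ultimately show ?case using nodup g'E ev(2) ext_Es by blast
next
  case (post f g1 c d)
  have fX: "f \<in> ext_events Cs Es G X1" and g1X: "g1 \<in> ext_events Cs Es G X2"
    using Rel_ev[OF g post(1,2)] by auto
  have cC: "c \<in> Cs" using post_Cs post(2,3) by auto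
  from Rel_cond[OF g post(7) cC] show ?case
  proof
    assume "c \<in> Cut Cs G X1 \<and> y' \<in> Cut Cs G X2"
    then show ?thesis using cut_post_ext[OF _ _ fX post(3)] g by (auto simp: good_def)
  next
    assume "\<exists>f g. (f, g) \<in> Rel X1 X2 \<and> f \<in> ext_events Cs Es G X1 \<and> g \<in> ext_events Cs Es G X2 \<and>
      c \<in> post G f \<and> y' \<in> post G g"
    then obtain f' g' where fg: "(f', g') \<in> Rel X1 X2" "c \<in> post G f'" "y' \<in> post G g'" by blast
    have "f' = f" using uniq[OF _ _ cC] fg(2) post(3) by (auto simp: post_def)
    then have "g' = g1" using post.IH fg(1) by simp
    moreover have "h y' = h d" using Rel_h[OF post(7)] post(5) by simp
    moreover have "inj_on h (post G g1)" using postbij g1X ext_Es by (auto simp: bij_betw_def)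
    ultimately show ?thesis using fg(3) post(4) by (auto dest: inj_onD)
  qed
qed

lemma Rel_inj: "good X1 X2 \<Longrightarrow> (x, y) \<in> Rel X1 X2 \<Longrightarrow> (x', y) \<in> Rel X1 X2 \<Longrightarrow> x = x'"
  using Rel_fun[OF good_sym] Rel_sym by metis

end


context unf begin

lemma lconf_sub: "cfg K \<Longrightarrow> f \<in> K \<Longrightarrow> lconf Es G f \<subseteq> K"
  using cfg_down by (auto simp: lconf_def lt_def)

lemma ext_ev_I: assumes K: "cfg K" and X: "cfg X" and XK: "X \<subseteq> K" and f: "f \<in> K" and fX: "f \<notin> X"
  shows "f \<in> ext_events Cs Es G X"
proof -
  have fE: "f \<in> Es" using f cfg_sub K by auto
  have "cfg (X \<union> lconf Es G f)" unfolding config_def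
  proof (intro conjI ballI impI)
    show "X \<union> lconf Es G f \<subseteq> Es" using cfg_sub[OF X] by (auto simp: lconf_def)
  next
    fix x e' assume x: "x \<in> X \<union> lconf Es G f" and e': "e' \<in> Es" and "lt G e' x"
    then show "e' \<in> X \<union> lconf Es G f" using cfg_down[OF X]
      by (auto simp: lconf_def lt_def intro: trancl_trans)
  next
    fix x y assume "x \<in> X \<union> lconf Es G f" "y \<in> X \<union> lconf Es G f"
    then have "x \<in> K" "y \<in> K" using XK lconf_sub[OF K f] by auto
    then show "\<not> conflict Cs G x y" using cfg_nc[OF K] by blast
  qed
  then show ?thesis using fE fX by (simp add: ext_events_def)
qed

lemma rel_ext: assumes g: "good X1 X2" and fin: "finite E"
  shows "E \<inter> X1 = {} \<Longrightarrow> cfg (X1 \<union> E) \<Longrightarrow> \<exists>E2. finite E2 \<and> E2 \<inter> X2 = {} \<and> cfg (X2 \<union> E2) \<and>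
    (\<forall>f\<in>E. \<exists>g\<in>E2. (f, g) \<in> Rel X1 X2) \<and> (\<forall>g\<in>E2. \<exists>f\<in>E. (f, g) \<in> Rel X1 X2) \<and>
    (\<forall>c\<in>Cut Cs G (X1 \<union> E). \<exists>d\<in>Cut Cs G (X2 \<union> E2). (c, d) \<in> Rel X1 X2) \<and>
    (\<forall>d\<in>Cut Cs G (X2 \<union> E2). \<exists>c\<in>Cut Cs G (X1 \<union> E). (c, d) \<in> Rel X1 X2)"
  using fin
proof (induction E rule: finite_remove_induct)
  case empty
  have hc: "h ` Cut Cs G X1 = h ` Cut Cs G X2" using g by (simp add: good_def)
  have "(\<forall>c\<in>Cut Cs G X1. \<exists>d\<in>Cut Cs G X2. (c, d) \<in> Rel X1 X2)"
  proof
    fix c assume c: "c \<in> Cut Cs G X1"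
    then have "h c \<in> h ` Cut Cs G X2" using hc by blast
    then obtain d where "d \<in> Cut Cs G X2" "h c = h d" by auto
    then show "\<exists>d\<in>Cut Cs G X2. (c, d) \<in> Rel X1 X2" using Rel.base[OF c] by blast
  qed
  moreover have "(\<forall>d\<in>Cut Cs G X2. \<exists>c\<in>Cut Cs G X1. (c, d) \<in> Rel X1 X2)"
  proof
    fix d assume d: "d \<in> Cut Cs G X2"
    then have "h d \<in> h ` Cut Cs G X1" using hc by blast
    then obtain c where "c \<in> Cut Cs G X1" "h c = h d" by auto
    then show "\<exists>c\<in>Cut Cs G X1. (c, d) \<in> Rel X1 X2" using Rel.base[OF _ d] by blast
  qed
  moreover have "cfg X2" using g by (simp add: good_def)
  ultimately show ?case by (intro exI[of _ "{}"]) auto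
next
  case (remove E)
  have X1: "cfg X1" "finite X1" and X2: "cfg X2" "finite X2" using g by (auto simp: good_def)
  define K1 where "K1 = X1 \<union> E"
  have K1: "cfg K1" using remove K1_def by simp
  obtain f where fE0: "f \<in> E" and fmx0: "\<forall>k\<in>E. (f, k) \<notin> G\<^sup>+" using finite_max[OF remove(1,2)] by blast
  have fE: "f \<in> Es" using fE0 cfg_sub[OF K1] K1_def by auto
  have fX1: "f \<notin> X1" using remove(5) fE0 by auto
  have fmx: "\<forall>k\<in>K1. (f, k) \<notin> G\<^sup>+"
  proof
    fix k assume "k \<in> K1"
    show "(f, k) \<notin> G\<^sup>+"
    proof
      assume fk: "(f, k) \<in> G\<^sup>+"
      show False
      proof (cases "k \<in> X1")
        case True then show False using cfg_down[OF X1(1) _ fE fk] fX1 by simp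
      next
        case False then show False using \<open>k \<in> K1\<close> K1_def fmx0 fk by auto
      qed
    qed
  qed
  have fK1: "f \<in> K1" using fE0 K1_def by simp
  have K1': "K1 - {f} = X1 \<union> (E - {f})" using K1_def fX1 by auto
  have cK1': "cfg (X1 \<union> (E - {f}))" using rm_max_cfg[OF K1 fK1 fmx] K1' by simp
  have disj: "(E - {f}) \<inter> X1 = {}" using remove(5) by blast
  obtain E2' where IH: "finite E2'" "E2' \<inter> X2 = {}" "cfg (X2 \<union> E2')"
    "\<forall>f\<in>E - {f}. \<exists>g\<in>E2'. (f, g) \<in> Rel X1 X2" "\<forall>g\<in>E2'. \<exists>f'\<in>E - {f}. (f', g) \<in> Rel X1 X2"
    "\<forall>c\<in>Cut Cs G (X1 \<union> (E - {f})). \<exists>d\<in>Cut Cs G (X2 \<union> E2'). (c, d) \<in> Rel X1 X2"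
    "\<forall>d\<in>Cut Cs G (X2 \<union> E2'). \<exists>c\<in>Cut Cs G (X1 \<union> (E - {f})). (c, d) \<in> Rel X1 X2"
    using remove(4)[OF fE0 disj cK1'] by (elim exE conjE) 
  define K2' where "K2' = X2 \<union> E2'"
  have K2': "cfg K2'" "finite K2'" using IH(1,3) X2(2) unfolding K2'_def by auto
  have pf: "pre G f \<subseteq> Cut Cs G (X1 \<union> (E - {f}))" using rm_max_pre[OF K1 fK1 fmx] K1' by simp
  define B where "B = {d \<in> Cut Cs G K2'. \<exists>c\<in>pre G f. (c, d) \<in> Rel X1 X2}"
  have BC: "B \<subseteq> Cut Cs G K2'" using B_def by auto
  have injK2: "inj_on h (Cut Cs G K2')" using cfg_marking[OF K2'(2,1)] by blast
  have hB: "h ` B = pre F (h f)"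
  proof
    show "h ` B \<subseteq> pre F (h f)"
    proof
      fix p assume "p \<in> h ` B"
      then obtain d c where "c \<in> pre G f" "(c, d) \<in> Rel X1 X2" "p = h d" unfolding B_def by blast
      then have "p = h c" "c \<in> pre G f" using Rel_h by auto
      then show "p \<in> pre F (h f)" using prebij[OF fE] unfolding bij_betw_def by blast
    qed
    show "pre F (h f) \<subseteq> h ` B"
    proof
      fix p assume "p \<in> pre F (h f)"
      then have "p \<in> h ` pre G f" using prebij[OF fE] by (simp add: bij_betw_def)
      then obtain c where c: "c \<in> pre G f" "h c = p" by blast
      then obtain d where "d \<in> Cut Cs G K2'" "(c, d) \<in> Rel X1 X2" using IH(6) pf K2'_def by blast
      then have "d \<in> B" "h d = p" using c Rel_h unfolding B_def by auto
      then show "p \<in> h ` B" by blast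
    qed
  qed
  have bijB: "bij_betw h B (pre F (h f))" unfolding bij_betw_def
    using hB inj_on_subset[OF injK2 BC] by simp
  have coB: "\<forall>x\<in>B. \<forall>y\<in>B. x \<noteq> y \<longrightarrow> co Cs Es G x y" using cut_co[OF K2'(1)] BC by blast
  have BCs: "B \<subseteq> Cs" using cut_Cs[OF K2'(1)] BC by blast
  obtain g where gE: "g \<in> Es" and pg: "pre G g = B" and hg: "h g = h f"
    using closure[OF hE[OF fE] BCs coB bijB] by blast
  have pgc: "pre G g \<subseteq> Cut Cs G K2'" using pg BC by simp
  have gK2: "g \<notin> K2'" using ext_notin[OF K2'(1) gE pgc] .
  have cK2: "cfg (insert g K2')" using ext_cfg[OF K2'(1) gE pgc] .
  have cut2: "Cut Cs G (insert g K2') = (Cut Cs G K2' - pre G g) \<union> post G g" using ext_cut[OF K2'(1) gE pgc] .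
  have cut1: "Cut Cs G K1 = (Cut Cs G (X1 \<union> (E - {f})) - pre G f) \<union> post G f"
    using rm_max_cut[OF K1 fK1 fmx] K1' by simp
  have fext: "f \<in> ext_events Cs Es G X1" using ext_ev_I[OF K1 X1(1) _ fK1 fX1] K1_def by auto
  have gext: "g \<in> ext_events Cs Es G X2" using ext_ev_I[OF cK2 X2(1) _ _ ] gK2 K2'_def by auto
  have fg: "(f, g) \<in> Rel X1 X2"
  proof (rule Rel.ev[OF fext gext hg[symmetric]])
    show "\<forall>c\<in>pre G f. \<exists>d\<in>pre G g. (c, d) \<in> Rel X1 X2"
    proof
      fix c assume c: "c \<in> pre G f"
      then obtain d where "d \<in> Cut Cs G K2'" "(c, d) \<in> Rel X1 X2" using IH(6) pf K2'_def by blast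
      then have "d \<in> B" using c unfolding B_def by blast
      then show "\<exists>d\<in>pre G g. (c, d) \<in> Rel X1 X2" using pg \<open>(c, d) \<in> Rel X1 X2\<close> by blast
    qed
    show "\<forall>d\<in>pre G g. \<exists>c\<in>pre G f. (c, d) \<in> Rel X1 X2" using pg B_def by blast
  qed
  have pbf: "bij_betw h (post G f) (post F (h f))" using postbij[OF fE] .
  have pbg: "bij_betw h (post G g) (post F (h f))" using postbij[OF gE] hg by simp
  have c1: "\<forall>c\<in>Cut Cs G K1. \<exists>d\<in>Cut Cs G (insert g K2'). (c, d) \<in> Rel X1 X2"
  proof
    fix c assume "c \<in> Cut Cs G K1"
    then consider "c \<in> Cut Cs G (X1 \<union> (E - {f}))" "c \<notin> pre G f" | "c \<in> post G f" using cut1 by blast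
    then show "\<exists>d\<in>Cut Cs G (insert g K2'). (c, d) \<in> Rel X1 X2"
    proof cases
      case 1
      then obtain d where d: "d \<in> Cut Cs G K2'" "(c, d) \<in> Rel X1 X2" using IH(6) K2'_def by blast
      have "d \<notin> pre G g"
      proof
        assume "d \<in> pre G g"
        then obtain c' where "c' \<in> pre G f" "(c', d) \<in> Rel X1 X2" using pg B_def by blast
        then show False using Rel_inj[OF g d(2)] 1(2) by blast
      qed
      then show ?thesis using d cut2 by blast
    next
      case 2
      have "h c \<in> h ` post G g" using pbf pbg 2 unfolding bij_betw_def by blast
      then obtain d where "d \<in> post G g" "h d = h c" by auto
      then have "(c, d) \<in> Rel X1 X2" using Rel.post[OF fg fE 2] by simp
      then show ?thesis using \<open>d \<in> post G g\<close> cut2 by blast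
    qed
  qed
  have c2: "\<forall>d\<in>Cut Cs G (insert g K2'). \<exists>c\<in>Cut Cs G K1. (c, d) \<in> Rel X1 X2"
  proof
    fix d assume "d \<in> Cut Cs G (insert g K2')"
    then consider "d \<in> Cut Cs G K2'" "d \<notin> pre G g" | "d \<in> post G g" using cut2 by blast
    then show "\<exists>c\<in>Cut Cs G K1. (c, d) \<in> Rel X1 X2"
    proof cases
      case 1
      then obtain c where c: "c \<in> Cut Cs G (X1 \<union> (E - {f}))" "(c, d) \<in> Rel X1 X2" using IH(7) K2'_def by blast
      have "c \<notin> pre G f" using 1 c pg B_def by blast
      then show ?thesis using c cut1 by blast
    next
      case 2
      have "h d \<in> h ` post G f" using pbf pbg 2 unfolding bij_betw_def by blast
      then obtain c where c: "c \<in> post G f" "h c = h d" by auto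
      then show ?thesis using Rel.post[OF fg fE c(1) 2 c(2)] cut1 by auto
    qed
  qed
  show ?case
  proof (intro exI[of _ "insert g E2'"] conjI)
    show "finite (insert g E2')" using IH(1) by simp
    show "insert g E2' \<inter> X2 = {}" using IH(2) gK2 K2'_def by auto
    show "cfg (X2 \<union> insert g E2')" using cK2 K2'_def by simp
    show "\<forall>f'\<in>E. \<exists>g'\<in>insert g E2'. (f', g') \<in> Rel X1 X2" using IH(4) fg by blast
    show "\<forall>g'\<in>insert g E2'. \<exists>f'\<in>E. (f', g') \<in> Rel X1 X2" using IH(5) fg fE0 by blast
    show "\<forall>c\<in>Cut Cs G (X1 \<union> E). \<exists>d\<in>Cut Cs G (X2 \<union> insert g E2'). (c, d) \<in> Rel X1 X2"
      using c1 K1_def K2'_def by simp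
    show "\<forall>d\<in>Cut Cs G (X2 \<union> insert g E2'). \<exists>c\<in>Cut Cs G (X1 \<union> E). (c, d) \<in> Rel X1 X2"
      using c2 K1_def K2'_def by simp
  qed
qed

end


context unf begin

abbreviation "up X \<equiv> up_nodes Cs Es G X"
abbreviation "ext X \<equiv> ext_events Cs Es G X"

lemma Rel_up: assumes g: "good X1 X2" shows "(x, y) \<in> Rel X1 X2 \<Longrightarrow> x \<in> up X1 \<and> y \<in> up X2"
proof (induction rule: Rel.induct)
  case (base c d) then show ?case by (simp add: up_nodes_def)
next
  case (ev f g) then show ?case by (simp add: up_nodes_def)
next
  case (post f g1 c d)
  have "f \<in> ext X1" "g1 \<in> ext X2" using Rel_ev[OF g post(1,2)] by auto
  then show ?case using post by (auto simp: up_nodes_def post_set_def)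
qed

lemma Rel_total: assumes g: "good X1 X2" and x: "x \<in> up X1" shows "\<exists>y. (x, y) \<in> Rel X1 X2"
proof -
  have X1: "cfg X1" using g by (simp add: good_def)
  have hc: "h ` Cut Cs G X1 = h ` Cut Cs G X2" using g by (simp add: good_def)
  have evcase: "\<exists>y. (f, y) \<in> Rel X1 X2" if f: "f \<in> ext X1" for f
  proof -
    have fE: "f \<in> Es" and fX: "f \<notin> X1" and c: "cfg (X1 \<union> lconf Es G f)"
      using f by (auto simp: ext_events_def)
    define E where "E = lconf Es G f - X1"
    have "X1 \<union> E = X1 \<union> lconf Es G f" using E_def by auto
    then have cE: "cfg (X1 \<union> E)" using c by simp
    have fin: "finite E" using lconf_cfg(2)[OF fE] E_def by simp
    have "f \<in> E" using lconf_cfg(3)[OF fE] fX E_def by simp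
    moreover have "E \<inter> X1 = {}" using E_def by auto
    ultimately show ?thesis using rel_ext[OF g fin _ cE] by blast
  qed
  from x consider "x \<in> Cut Cs G X1" | "x \<in> ext X1" | "x \<in> post_set G (ext X1)"
    by (auto simp: up_nodes_def)
  then show ?thesis
  proof cases
    case 1
    then have "h x \<in> h ` Cut Cs G X2" using hc by blast
    then obtain d where "d \<in> Cut Cs G X2" "h x = h d" by auto
    then show ?thesis using Rel.base[OF 1] by blast
  next
    case 2 then show ?thesis using evcase by blast
  next
    case 3
    then obtain f where f: "f \<in> ext X1" "x \<in> post G f" by (auto simp: post_set_def)
    obtain y where fy: "(f, y) \<in> Rel X1 X2" using evcase[OF f(1)] by blast
    have fE: "f \<in> Es" using f ext_Es by auto
    have yE: "y \<in> Es" using Rel_ev[OF g fy fE] ext_Es by auto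
    have "h x \<in> post F (h f)" using postbij[OF fE] f(2) by (auto simp: bij_betw_def)
    then have "h x \<in> h ` post G y" using postbij[OF yE] Rel_h[OF fy] by (simp add: bij_betw_def)
    then obtain d where "d \<in> post G y" "h x = h d" by auto
    then show ?thesis using Rel.post[OF fy fE f(2)] by blast
  qed
qed

definition isoR :: "'n set \<Rightarrow> 'n set \<Rightarrow> 'n \<Rightarrow> 'n" where
  "isoR X1 X2 x = (THE y. (x, y) \<in> Rel X1 X2)"

lemma iso_eq: "good X1 X2 \<Longrightarrow> (x, y) \<in> Rel X1 X2 \<Longrightarrow> isoR X1 X2 x = y"
  unfolding isoR_def using Rel_fun by (metis the_equality)

lemma iso_rel: "good X1 X2 \<Longrightarrow> x \<in> up X1 \<Longrightarrow> (x, isoR X1 X2 x) \<in> Rel X1 X2"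
  using Rel_total iso_eq by metis

lemma iso_props: assumes g: "good X1 X2"
  shows "bij_betw (isoR X1 X2) (up X1) (up X2)"
    and "\<forall>x\<in>up X1. h (isoR X1 X2 x) = h x"
    and "\<forall>x\<in>up X1. \<forall>y\<in>up X1. (x, y) \<in> G \<longleftrightarrow> (isoR X1 X2 x, isoR X1 X2 y) \<in> G"
proof -
  show "bij_betw (isoR X1 X2) (up X1) (up X2)" unfolding bij_betw_def
  proof
    show "inj_on (isoR X1 X2) (up X1)"
    proof (rule inj_onI)
      fix x x' assume "x \<in> up X1" "x' \<in> up X1" "isoR X1 X2 x = isoR X1 X2 x'"
      then show "x = x'" using iso_rel[OF g] Rel_inj[OF g] by metis
    qed
    show "isoR X1 X2 ` up X1 = up X2"
    proof
      show "isoR X1 X2 ` up X1 \<subseteq> up X2" using iso_rel[OF g] Rel_up[OF g] by blast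
      show "up X2 \<subseteq> isoR X1 X2 ` up X1"
      proof
        fix y assume "y \<in> up X2"
        then obtain x where "(y, x) \<in> Rel X2 X1" using Rel_total[OF good_sym[OF g]] by blast
        then have r: "(x, y) \<in> Rel X1 X2" using Rel_sym[OF good_sym[OF g]] by blast
        then show "y \<in> isoR X1 X2 ` up X1" using iso_eq[OF g r] Rel_up[OF g r] by blast
      qed
    qed
  qed
  show "\<forall>x\<in>up X1. h (isoR X1 X2 x) = h x" using iso_rel[OF g] Rel_h by metis
  show "\<forall>x\<in>up X1. \<forall>y\<in>up X1. (x, y) \<in> G \<longleftrightarrow> (isoR X1 X2 x, isoR X1 X2 y) \<in> G"
  proof (intro ballI)
    fix x y assume x: "x \<in> up X1" and y: "y \<in> up X1"
    define x' where "x' = isoR X1 X2 x"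
    define y' where "y' = isoR X1 X2 y"
    have rx: "(x, x') \<in> Rel X1 X2" using iso_rel[OF g x] x'_def by simp
    have ry: "(y, y') \<in> Rel X1 X2" using iso_rel[OF g y] y'_def by simp
    have X1: "cfg X1" and X2: "cfg X2" using g by (auto simp: good_def)
    have nx: "(x \<in> Cs \<and> x' \<in> Cs) \<or> (x \<in> ext X1 \<and> x' \<in> ext X2)" using Rel_node[OF g rx] .
    have ny: "(y \<in> Cs \<and> y' \<in> Cs) \<or> (y \<in> ext X1 \<and> y' \<in> ext X2)" using Rel_node[OF g ry] .
    have "(x, y) \<in> G \<longleftrightarrow> (x', y') \<in> G"
    proof (cases "x \<in> Cs")
      case xC: True
      then have xC': "x' \<in> Cs" using nx CE ext_Es by blast
      show ?thesis
      proof (cases "y \<in> Cs")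
        case True
        then have "y' \<in> Cs" using ny CE ext_Es by blast
        then show ?thesis using True xC xC' G_C CE by blast
      next
        case False
        then have yE: "y \<in> Es" "y \<in> ext X1" "y' \<in> ext X2" using ny ext_Es by auto
        note rs = Rel_evc[OF g ry yE(1)]
        show ?thesis
        proof
          assume "(x, y) \<in> G"
          then have "x \<in> pre G y" by (simp add: pre_def)
          then obtain d where "d \<in> pre G y'" "(x, d) \<in> Rel X1 X2" using rs by blast
          then have "d = x'" using Rel_fun[OF g rx] by blast
          then show "(x', y') \<in> G" using \<open>d \<in> pre G y'\<close> by (simp add: pre_def)
        next
          assume "(x', y') \<in> G"
          then have "x' \<in> pre G y'" by (simp add: pre_def)
          then obtain c where "c \<in> pre G y" "(c, x') \<in> Rel X1 X2" using rs by blast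
          then have "c = x" using Rel_inj[OF g rx] by blast
          then show "(x, y) \<in> G" using \<open>c \<in> pre G y\<close> by (simp add: pre_def)
        qed
      qed
    next
      case False
      then have xE: "x \<in> ext X1" "x' \<in> ext X2" using nx by auto
      show ?thesis
      proof (cases "y \<in> Cs")
        case False
        then have "y \<in> Es" "y' \<in> Es" using ny ext_Es by auto
        moreover have "x \<in> Es" "x' \<in> Es" using xE ext_Es by auto
        ultimately show ?thesis using G_E CE by blast
      next
        case yC: True
        from Rel_cond[OF g ry yC] show ?thesis
        proof
          assume a: "y \<in> Cut Cs G X1 \<and> y' \<in> Cut Cs G X2"
          have "(x, y) \<notin> G" using cut_post_ext[OF X1 _ xE(1)] a by (auto simp: post_def)
          moreover have "(x', y') \<notin> G" using cut_post_ext[OF X2 _ xE(2)] a by (auto simp: post_def)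
          ultimately show ?thesis by simp
        next
          assume "\<exists>f g. (f, g) \<in> Rel X1 X2 \<and> f \<in> ext X1 \<and> g \<in> ext X2 \<and> y \<in> post G f \<and> y' \<in> post G g"
          then obtain f g1 where fg: "(f, g1) \<in> Rel X1 X2" "y \<in> post G f" "y' \<in> post G g1" by blast
          have y'C: "y' \<in> Cs" using ny yC CE ext_Es by blast
          show ?thesis
          proof
            assume "(x, y) \<in> G"
            then have "x = f" using uniq[OF _ _ yC] fg(2) by (auto simp: post_def)
            then have "x' = g1" using Rel_fun[OF g fg(1)] rx by blast
            then show "(x', y') \<in> G" using fg(3) by (simp add: post_def)
          next
            assume "(x', y') \<in> G"
            then have "x' = g1" using uniq[OF _ _ y'C] fg(3) by (auto simp: post_def)
            then have "x = f" using Rel_inj[OF g fg(1)] rx by blast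
            then show "(x, y) \<in> G" using fg(2) by (simp add: post_def)
          qed
        qed
      qed
    qed
    then show "(x, y) \<in> G \<longleftrightarrow> (isoR X1 X2 x, isoR X1 X2 y) \<in> G" using x'_def y'_def by simp
  qed
qed

end


context unf begin

lemma complete_prefix: assumes adeq: "adequate_order Cs Es G h prec" and C: "finite C" "cfg C"
  shows "\<exists>C'. finite C' \<and> cfg C' \<and> h ` Cut Cs G C' = h ` Cut Cs G C \<and> (\<forall>e\<in>C'. \<not> cutoff Cs Es G h prec e)"
proof -
  define FC where "FC = {X. cfg X \<and> finite X}"
  define r where "r = {(X, Y). X \<in> FC \<and> Y \<in> FC \<and> prec X Y}"
  have AD: "(\<forall>X\<in>FC. \<not> prec X X) \<and>
       (\<forall>X\<in>FC. \<forall>Y\<in>FC. \<forall>Z\<in>FC. prec X Y \<and> prec Y Z \<longrightarrow> prec X Z) \<and>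
       wf {(X, Y). X \<in> FC \<and> Y \<in> FC \<and> prec X Y} \<and>
       (\<forall>X\<in>FC. \<forall>Y\<in>FC. X \<subset> Y \<longrightarrow> prec X Y) \<and>
       (\<forall>X1\<in>FC. \<forall>X2\<in>FC. prec X1 X2 \<and> Mark Cs G h X1 = Mark Cs G h X2 \<longrightarrow>
          (\<forall>I. bij_betw I (up X1) (up X2) \<and>
               (\<forall>x\<in>up X1. h (I x) = h x) \<and>
               (\<forall>x\<in>up X1. \<forall>y\<in>up X1. (x, y) \<in> G \<longleftrightarrow> (I x, I y) \<in> G) \<longrightarrow>
             (\<forall>Ex. finite Ex \<and> Ex \<inter> X1 = {} \<and> cfg (X1 \<union> Ex) \<longrightarrow>
                prec (X1 \<union> Ex) (X2 \<union> I ` Ex))))"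
    using adeq unfolding adequate_order_def Let_def FC_def .
  have wfr: "wf r" unfolding r_def using AD[THEN conjunct2, THEN conjunct2, THEN conjunct1] .
  have adx: "\<And>X1 X2 I Ex. X1 \<in> FC \<Longrightarrow> X2 \<in> FC \<Longrightarrow> prec X1 X2 \<Longrightarrow> Mark Cs G h X1 = Mark Cs G h X2 \<Longrightarrow>
     bij_betw I (up X1) (up X2) \<Longrightarrow> (\<forall>x\<in>up X1. h (I x) = h x) \<Longrightarrow>
     (\<forall>x\<in>up X1. \<forall>y\<in>up X1. (x, y) \<in> G \<longleftrightarrow> (I x, I y) \<in> G) \<Longrightarrow>
     finite Ex \<Longrightarrow> Ex \<inter> X1 = {} \<Longrightarrow> cfg (X1 \<union> Ex) \<Longrightarrow> prec (X1 \<union> Ex) (X2 \<union> I ` Ex)"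
  proof -
    fix X1 X2 I Ex
    assume a: "X1 \<in> FC" "X2 \<in> FC" "prec X1 X2" "Mark Cs G h X1 = Mark Cs G h X2"
      "bij_betw I (up X1) (up X2)" "(\<forall>x\<in>up X1. h (I x) = h x)"
      "(\<forall>x\<in>up X1. \<forall>y\<in>up X1. (x, y) \<in> G \<longleftrightarrow> (I x, I y) \<in> G)"
      "finite Ex" "Ex \<inter> X1 = {}" "cfg (X1 \<union> Ex)"
    note H = AD[THEN conjunct2, THEN conjunct2, THEN conjunct2, THEN conjunct2]
    show "prec (X1 \<union> Ex) (X2 \<union> I ` Ex)"
      by (rule H[rule_format]) (simp_all add: a)
  qed
  define Q where "Q = {X\<in>FC. h ` Cut Cs G X = h ` Cut Cs G C}"
  have "C \<in> Q" using C Q_def FC_def by simp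
  then obtain z where zQ: "z \<in> Q" and zmin: "\<forall>y. (y, z) \<in> r \<longrightarrow> y \<notin> Q"
    using wfr unfolding wf_eq_minimal by blast
  have z: "finite z" "cfg z" using zQ Q_def FC_def by auto
  have "\<forall>e\<in>z. \<not> cutoff Cs Es G h prec e"
  proof (intro ballI notI)
    fix e assume ez: "e \<in> z" and "cutoff Cs Es G h prec e"
    then obtain e' where cr: "corresponding Cs Es G h prec e e'" by (auto simp: cutoff_def)
    then have eE: "e \<in> Es" and e'E: "e' \<in> Es"
      and mk: "Mark Cs G h (lconf Es G e) = Mark Cs G h (lconf Es G e')"
      and pr: "prec (lconf Es G e') (lconf Es G e)" by (auto simp: corresponding_def)
    define X1 where "X1 = lconf Es G e'"
    define X2 where "X2 = lconf Es G e"
    have g: "good X1 X2" using lconf_cfg[OF eE] lconf_cfg[OF e'E] mk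
      unfolding good_def X1_def X2_def Mark_def by simp
    have g': "good X2 X1" using good_sym[OF g] .
    have X2z: "X2 \<subseteq> z" using lconf_sub[OF z(2) ez] X2_def by simp
    define E where "E = z - X2"
    have zE: "X2 \<union> E = z" using X2z E_def by auto
    have finE: "finite E" using z E_def by simp
    obtain E' where E': "finite E'" "E' \<inter> X1 = {}" "cfg (X1 \<union> E')"
      "\<forall>f\<in>E. \<exists>g\<in>E'. (f, g) \<in> Rel X2 X1" "\<forall>g\<in>E'. \<exists>f\<in>E. (f, g) \<in> Rel X2 X1"
      "\<forall>c\<in>Cut Cs G (X2 \<union> E). \<exists>d\<in>Cut Cs G (X1 \<union> E'). (c, d) \<in> Rel X2 X1"
      "\<forall>d\<in>Cut Cs G (X1 \<union> E'). \<exists>c\<in>Cut Cs G (X2 \<union> E). (c, d) \<in> Rel X2 X1"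
    proof -
      have "E \<inter> X2 = {}" using E_def by auto
      then show ?thesis using rel_ext[OF g' finE] zE z(2) that by blast
    qed
    have img: "isoR X1 X2 ` E' = E"
    proof
      show "isoR X1 X2 ` E' \<subseteq> E"
      proof
        fix y assume "y \<in> isoR X1 X2 ` E'"
        then obtain g' where "g' \<in> E'" "y = isoR X1 X2 g'" by blast
        then obtain f where "f \<in> E" "(f, g') \<in> Rel X2 X1" using E'(5) by blast
        then have "(g', f) \<in> Rel X1 X2" using Rel_sym[OF g'] by blast
        then show "y \<in> E" using iso_eq[OF g] \<open>y = isoR X1 X2 g'\<close> \<open>f \<in> E\<close> by simp
      qed
      show "E \<subseteq> isoR X1 X2 ` E'"
      proof
        fix f assume "f \<in> E"
        then obtain g' where "g' \<in> E'" "(f, g') \<in> Rel X2 X1" using E'(4) by blast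
        then have "(g', f) \<in> Rel X1 X2" using Rel_sym[OF g'] by blast
        then show "f \<in> isoR X1 X2 ` E'" using iso_eq[OF g] \<open>g' \<in> E'\<close> by (metis imageI)
      qed
    qed
    have X1FC: "X1 \<in> FC" and X2FC: "X2 \<in> FC" using g unfolding good_def FC_def by auto
    have mk': "Mark Cs G h X1 = Mark Cs G h X2" using mk X1_def X2_def by simp
    note ip = iso_props[OF g]
    have "prec (X1 \<union> E') (X2 \<union> isoR X1 X2 ` E')"
      using adx[OF X1FC X2FC pr[folded X1_def X2_def] mk' ip E'(1,2,3)] .
    then have p: "prec (X1 \<union> E') z" using img zE by simp
    have hcut: "h ` Cut Cs G (X1 \<union> E') = h ` Cut Cs G z"
    proof
      show "h ` Cut Cs G (X1 \<union> E') \<subseteq> h ` Cut Cs G z"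
      proof
        fix p assume "p \<in> h ` Cut Cs G (X1 \<union> E')"
        then obtain d where "d \<in> Cut Cs G (X1 \<union> E')" "p = h d" by blast
        then obtain c where "c \<in> Cut Cs G (X2 \<union> E)" "(c, d) \<in> Rel X2 X1" using E'(7) by blast
        then show "p \<in> h ` Cut Cs G z" using Rel_h zE \<open>p = h d\<close> by (metis imageI)
      qed
      show "h ` Cut Cs G z \<subseteq> h ` Cut Cs G (X1 \<union> E')"
      proof
        fix p assume "p \<in> h ` Cut Cs G z"
        then obtain c where "c \<in> Cut Cs G (X2 \<union> E)" "p = h c" using zE by blast
        then obtain d where "d \<in> Cut Cs G (X1 \<union> E')" "(c, d) \<in> Rel X2 X1" using E'(6) by blast
        then show "p \<in> h ` Cut Cs G (X1 \<union> E')" using Rel_h \<open>p = h c\<close> by (metis imageI)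
      qed
    qed
    have fin1: "finite (X1 \<union> E')" using E'(1) g by (simp add: good_def)
    have "X1 \<union> E' \<in> Q" using hcut zQ fin1 E'(3) unfolding Q_def FC_def by simp
    moreover have "(X1 \<union> E', z) \<in> r" using p fin1 E'(3) z unfolding r_def FC_def by simp
    ultimately show False using zmin by blast
  qed
  then show ?thesis using z zQ Q_def by auto
qed

end


context unf begin

abbreviation "PN prec \<equiv> prefix_nodes Cs Es G h prec"

lemma PN_sub: "PN prec \<subseteq> Cs \<union> Es" by (auto simp: prefix_nodes_def)

lemma PN_back: "y \<in> PN prec \<Longrightarrow> (z, y) \<in> G \<Longrightarrow> z \<in> PN prec"
  unfolding prefix_nodes_def by blast

lemma PN_I: assumes "X \<subseteq> Cs \<union> Es" "\<forall>x\<in>X. \<forall>y. (y, x) \<in> G \<longrightarrow> y \<in> X"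
  "\<forall>e\<in>X \<inter> Es. \<forall>e'. lt G e' e \<longrightarrow> \<not> cutoff Cs Es G h prec e'" shows "X \<subseteq> PN prec"
  using assms unfolding prefix_nodes_def by blast

lemma PN_witness: assumes K: "cfg K" and nc: "\<forall>f\<in>K. \<forall>e'. (e', f) \<in> G\<^sup>+ \<longrightarrow> \<not> cutoff Cs Es G h prec e'"
  shows "K \<union> Min_conds Cs G \<union> post_set G K \<subseteq> PN prec"
proof (rule PN_I)
  show "K \<union> Min_conds Cs G \<union> post_set G K \<subseteq> Cs \<union> Es"
    using cfg_sub[OF K] Min_Cs post_Cs by (fastforce simp: post_set_def)
  show "\<forall>x\<in>K \<union> Min_conds Cs G \<union> post_set G K. \<forall>y. (y, x) \<in> G \<longrightarrow> y \<in> K \<union> Min_conds Cs G \<union> post_set G K"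
  proof (intro ballI allI impI)
    fix x y assume x: "x \<in> K \<union> Min_conds Cs G \<union> post_set G K" and yx: "(y, x) \<in> G"
    consider "x \<in> K" | "x \<in> Min_conds Cs G" | "x \<in> post_set G K" using x by blast
    then show "y \<in> K \<union> Min_conds Cs G \<union> post_set G K"
    proof cases
      case 1
      have xE: "x \<in> Es" using 1 cfg_sub K by auto
      have yC: "y \<in> Cs" using G_E2[OF yx xE] .
      show ?thesis
      proof (cases "pre G y = {}")
        case True then show ?thesis using yC by (simp add: Min_conds_def)
      next
        case False
        then obtain g where gy: "(g, y) \<in> G" by (auto simp: pre_def)
        have gE: "g \<in> Es" using G_C2[OF gy yC] .
        have "(g, x) \<in> G\<^sup>+" using gy yx by auto
        then have "g \<in> K" using cfg_down[OF K 1 gE] by simp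
        then show ?thesis using gy by (auto simp: post_set_def post_def)
      qed
    next
      case 2 then show ?thesis using yx by (auto simp: Min_conds_def pre_def)
    next
      case 3
      then obtain g where g: "g \<in> K" "(g, x) \<in> G" by (auto simp: post_set_def post_def)
      have xC: "x \<in> Cs" using G_E[OF g(2)] g(1) cfg_sub K by auto
      have "y = g" using uniq[OF yx g(2) xC] .
      then show ?thesis using g by simp
    qed
  qed
  show "\<forall>e\<in>(K \<union> Min_conds Cs G \<union> post_set G K) \<inter> Es. \<forall>e'. lt G e' e \<longrightarrow> \<not> cutoff Cs Es G h prec e'"
  proof (intro ballI allI impI)
    fix e e' assume e: "e \<in> (K \<union> Min_conds Cs G \<union> post_set G K) \<inter> Es" and "lt G e' e"
    have "Min_conds Cs G \<inter> Es = {}" using Min_Cs CE by auto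
    moreover have "post_set G K \<inter> Es = {}" using post_Cs cfg_sub[OF K] CE by (fastforce simp: post_set_def)
    ultimately have "e \<in> K" using e by blast
    then show "\<not> cutoff Cs Es G h prec e'" using nc \<open>lt G e' e\<close> by (simp add: lt_def)
  qed
qed

lemma PN_post: assumes e: "e \<in> PN prec" "e \<in> Es" and c: "c \<in> post G e" shows "c \<in> PN prec"
proof -
  obtain X where X: "e \<in> X" "X \<subseteq> Cs \<union> Es" "\<forall>x\<in>X. \<forall>y. (y, x) \<in> G \<longrightarrow> y \<in> X"
    "\<forall>e\<in>X \<inter> Es. \<forall>e'. lt G e' e \<longrightarrow> \<not> cutoff Cs Es G h prec e'"
    using e(1) unfolding prefix_nodes_def by blast
  have ec: "(e, c) \<in> G" using c by (simp add: post_def)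
  have cC: "c \<in> Cs" using G_E[OF ec e(2)] .
  have "insert c X \<subseteq> PN prec"
  proof (rule PN_I)
    show "insert c X \<subseteq> Cs \<union> Es" using X(2) cC by auto
    show "\<forall>x\<in>insert c X. \<forall>y. (y, x) \<in> G \<longrightarrow> y \<in> insert c X"
      using X(3) uniq[OF ec _ cC] X(1) by blast
    show "\<forall>e\<in>insert c X \<inter> Es. \<forall>e'. lt G e' e \<longrightarrow> \<not> cutoff Cs Es G h prec e'"
      using X(4) cC CE by blast
  qed
  then show ?thesis by simp
qed

abbreviation "Gp prec \<equiv> G \<inter> (PN prec \<times> PN prec)"

lemma PN_rtr: "(x, y) \<in> G\<^sup>* \<Longrightarrow> y \<in> PN prec \<Longrightarrow> x \<in> PN prec \<and> (x, y) \<in> (Gp prec)\<^sup>*"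
proof (induction rule: converse_rtrancl_induct)
  case base then show ?case by simp
next
  case (step x z)
  then have "z \<in> PN prec" "(z, y) \<in> (Gp prec)\<^sup>*" by simp_all
  moreover have "x \<in> PN prec" using PN_back[OF \<open>z \<in> PN prec\<close> step(1)] .
  moreover have "(x, z) \<in> Gp prec" using step(1) \<open>x \<in> PN prec\<close> \<open>z \<in> PN prec\<close> by simp
  ultimately show ?case using converse_rtrancl_into_rtrancl by metis
qed

lemma PN_tr: "(x, y) \<in> G\<^sup>+ \<Longrightarrow> y \<in> PN prec \<Longrightarrow> (x, y) \<in> (Gp prec)\<^sup>+"
proof -
  assume xy: "(x, y) \<in> G\<^sup>+" and y: "y \<in> PN prec"
  obtain z where z: "(x, z) \<in> G\<^sup>*" "(z, y) \<in> G" using trancl_last[OF xy] by blast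
  have zP: "z \<in> PN prec" using PN_back[OF y z(2)] .
  have "(x, z) \<in> (Gp prec)\<^sup>*" using PN_rtr[OF z(1) zP] by simp
  moreover have "(z, y) \<in> Gp prec" using z(2) zP y by simp
  ultimately show ?thesis by (simp add: rtrancl_into_trancl1)
qed

lemma Gp_tr: "(x, y) \<in> (Gp prec)\<^sup>+ \<Longrightarrow> (x, y) \<in> G\<^sup>+"
  by (erule trancl_mono) auto
lemma Gp_rtr: "(x, y) \<in> (Gp prec)\<^sup>* \<Longrightarrow> (x, y) \<in> G\<^sup>*"
  using rtrancl_mono[of "Gp prec" G] by blast

lemma lt_PN: "y \<in> PN prec \<Longrightarrow> lt (Gp prec) x y \<longleftrightarrow> lt G x y"
  unfolding lt_def using PN_tr Gp_tr by blast

lemma conflict_PN: assumes x: "x \<in> PN prec" and y: "y \<in> PN prec"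
  shows "conflict (Cs \<inter> PN prec) (Gp prec) x y \<longleftrightarrow> conflict Cs G x y"
proof
  assume "conflict (Cs \<inter> PN prec) (Gp prec) x y"
  then show "conflict Cs G x y" unfolding conflict_def using Gp_rtr by blast
next
  assume "conflict Cs G x y"
  then obtain s t1 t2 where st: "s \<in> Cs" "t1 \<noteq> t2" "(s, t1) \<in> G" "(s, t2) \<in> G"
      "(t1, x) \<in> G\<^sup>*" "(t2, y) \<in> G\<^sup>*" unfolding conflict_def by blast
  have t1: "t1 \<in> PN prec" "(t1, x) \<in> (Gp prec)\<^sup>*" using PN_rtr[OF st(5) x] by auto
  have t2: "t2 \<in> PN prec" "(t2, y) \<in> (Gp prec)\<^sup>*" using PN_rtr[OF st(6) y] by auto
  have s: "s \<in> PN prec" using PN_back[OF t1(1) st(3)] .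
  show "conflict (Cs \<inter> PN prec) (Gp prec) x y" unfolding conflict_def
    using st s t1 t2 by blast
qed

lemma co_PN: assumes x: "x \<in> PN prec" and y: "y \<in> PN prec"
  shows "co (Cs \<inter> PN prec) (Es \<inter> PN prec) (Gp prec) x y \<longleftrightarrow> co Cs Es G x y"
  using lt_PN[OF x] lt_PN[OF y] conflict_PN[OF x y] x y PN_sub unfolding co_def by blast

lemma pre_PN: "x \<in> PN prec \<Longrightarrow> pre (Gp prec) x = pre G x"
  using PN_back by (auto simp: pre_def)

lemma post_PN: "e \<in> PN prec \<Longrightarrow> e \<in> Es \<Longrightarrow> post (Gp prec) e = post G e"
  using PN_post by (auto simp: post_def)

lemma max_adj_PN: assumes e1: "e1 \<in> PN prec" and e2: "e2 \<in> PN prec" and m: "max_adj (Gp prec) e1 e2"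
  shows "(e1, e2) \<in> G\<^sup>+ \<and> (\<forall>e'\<in>pre_set G (pre G e2). (e1, e') \<notin> G\<^sup>+)"
proof -
  have "lt (Gp prec) e1 e2" using m by (simp add: max_adj_def)
  then have "(e1, e2) \<in> G\<^sup>+" using lt_PN[OF e2] by (simp add: lt_def)
  moreover have ps: "pre_set (Gp prec) (pre (Gp prec) e2) = pre_set G (pre G e2)"
  proof -
    have "\<forall>c\<in>pre G e2. c \<in> PN prec" using PN_back e2 by (auto simp: pre_def)
    then show ?thesis using pre_PN[OF e2] pre_PN by (simp add: pre_set_def)
  qed
  moreover have "\<forall>e'\<in>pre_set G (pre G e2). e' \<in> PN prec"
    using e2 by (auto simp: pre_set_def pre_def intro: PN_back[OF PN_back[OF e2]])
  ultimately show ?thesis using m lt_PN unfolding max_adj_def Max_ev_def lt_def by auto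
qed

end


context unf begin

lemma lconf_rt: "x \<in> lconf Es G e \<Longrightarrow> (x, e) \<in> G\<^sup>*"
  by (auto simp: lconf_def lt_def)

lemma co_E: "co Cs Es G x y \<Longrightarrow> (x, y) \<notin> G\<^sup>+ \<and> (y, x) \<notin> G\<^sup>+ \<and> \<not> conflict Cs G x y"
  by (simp add: co_def lt_def)

lemma tar_co: assumes e1: "e1 \<in> Es" and e2: "e2 \<in> Es" and ne: "e1 \<noteq> e2" and co: "co Cs Es G e1 e2"
  shows "tar T F M0 (h e1) (h e2)"
proof -
  note c = co_E[OF co]
  define K where "K = (lconf Es G e1 \<union> lconf Es G e2) - {e2}"
  have inK: "x \<in> K \<Longrightarrow> (x, e1) \<in> G\<^sup>* \<or> (x, e2) \<in> G\<^sup>*" for x using lconf_rt K_def by blast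
  have cK: "cfg K" unfolding config_def
  proof (intro conjI ballI impI)
    show "K \<subseteq> Es" using K_def by (auto simp: lconf_def)
  next
    fix x e' assume x: "x \<in> K" and e': "e' \<in> Es" and lt: "lt G e' x"
    have ex: "(e', x) \<in> G\<^sup>+" using lt by (simp add: lt_def)
    have "e' \<noteq> e2"
    proof
      assume "e' = e2"
      then have "(e2, x) \<in> G\<^sup>+" using ex by simp
      moreover have "x \<noteq> e2" using x K_def by simp
      ultimately show False
      proof -
        assume a: "(e2, x) \<in> G\<^sup>+" "x \<noteq> e2"
        from inK[OF x] show False
        proof
          assume "(x, e1) \<in> G\<^sup>*" then show False using a c by (meson trancl_rtrancl_trancl)
        next
          assume "(x, e2) \<in> G\<^sup>*" then have "(x, e2) \<in> G\<^sup>+" using rtr_tr a by blast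
          then show False using a acyc by (meson trancl_trans)
        qed
      qed
    qed
    moreover have "(e', e1) \<in> G\<^sup>+ \<or> (e', e2) \<in> G\<^sup>+" using inK[OF x] ex
      by (meson trancl_rtrancl_trancl)
    ultimately show "e' \<in> K" using K_def e' by (auto simp: lconf_def lt_def)
  next
    fix x y assume x: "x \<in> K" and y: "y \<in> K"
    show "\<not> conflict Cs G x y"
    proof
      assume cf: "conflict Cs G x y"
      have "conflict Cs G e1 e1 \<or> conflict Cs G e1 e2 \<or> conflict Cs G e2 e1 \<or> conflict Cs G e2 e2"
        using inK[OF x] inK[OF y] conflict_mono[OF cf] by blast
      then show False using nsc e1 e2 c conflict_sym by blast
    qed
  qed
  have fK: "finite K" using lconf_cfg(2)[OF e1] lconf_cfg(2)[OF e2] K_def by simp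
  have e1K: "e1 \<in> K" using lconf_cfg(3)[OF e1] ne K_def by simp
  have mx: "\<forall>f\<in>K. (e1, f) \<notin> G\<^sup>+"
  proof (intro ballI notI)
    fix f assume "f \<in> K" "(e1, f) \<in> G\<^sup>+"
    then have "(e1, e1) \<in> G\<^sup>+ \<or> (e1, e2) \<in> G\<^sup>+" using inK by (meson trancl_rtrancl_trancl)
    then show False using acyc c by blast
  qed
  have pe: "pre G e2 \<subseteq> Cut Cs G K"
  proof
    fix c0 assume c0: "c0 \<in> pre G e2"
    have ce: "(c0, e2) \<in> G" using c0 by (simp add: pre_def)
    have cC: "c0 \<in> Cs" using pre_Cs[OF e2] c0 by auto
    have A: "c0 \<in> Min_conds Cs G \<union> post_set G K"
    proof (cases "pre G c0 = {}")
      case True then show ?thesis using cC by (simp add: Min_conds_def)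
    next
      case False
      then obtain g where g: "(g, c0) \<in> G" by (auto simp: pre_def)
      have gE: "g \<in> Es" using G_C2[OF g cC] .
      have ge: "(g, e2) \<in> G\<^sup>+" using g ce by auto
      then have "g \<noteq> e2" using acyc by auto
      then have "g \<in> K" using ge gE K_def by (auto simp: lconf_def lt_def)
      then show ?thesis using g by (auto simp: post_set_def post_def)
    qed
    have B: "c0 \<notin> pre_set G K"
    proof
      assume "c0 \<in> pre_set G K"
      then obtain f where f: "f \<in> K" "(c0, f) \<in> G" by (auto simp: pre_set_def pre_def)
      have "f \<noteq> e2" using f K_def by simp
      then have cf: "conflict Cs G e2 f" using conflict_I[OF cC _ ce f(2)] by blast
      have "conflict Cs G e2 e1 \<or> conflict Cs G e2 e2"
        using inK[OF f(1)] conflict_mono[OF cf] by blast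
      then show False using nsc e2 c conflict_sym by blast
    qed
    show "c0 \<in> Cut Cs G K" using A B by (simp add: Cut_def)
  qed
  have "pre F (h e2) \<subseteq> h ` Cut Cs G K" using prebij[OF e2] image_mono[OF pe, of h] by (simp add: bij_betw_def)
  then show ?thesis using tar_from_cfg[OF fK cK e1K mx hE[OF e2]] by simp
qed

lemma maxK: assumes e1: "e1 \<in> Es" and e2: "e2 \<in> Es" and lt: "(e1, e2) \<in> G\<^sup>+"
  and mx: "\<forall>e'\<in>pre_set G (pre G e2). (e1, e') \<notin> G\<^sup>+"
  shows "finite (lconf Es G e2 - {e2})" "cfg (lconf Es G e2 - {e2})" "e1 \<in> lconf Es G e2 - {e2}"
    "\<forall>f\<in>lconf Es G e2 - {e2}. (e1, f) \<notin> G\<^sup>+" "pre G e2 \<subseteq> Cut Cs G (lconf Es G e2 - {e2})"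
proof -
  note L = lconf_cfg[OF e2]
  have m2: "\<forall>f\<in>lconf Es G e2. (e2, f) \<notin> G\<^sup>+" using lconf_max[OF e2] by blast
  show "finite (lconf Es G e2 - {e2})" using L by simp
  show "cfg (lconf Es G e2 - {e2})" using rm_max_cfg[OF L(1) L(3) m2] .
  show "pre G e2 \<subseteq> Cut Cs G (lconf Es G e2 - {e2})" using rm_max_pre[OF L(1) L(3) m2] .
  show "e1 \<in> lconf Es G e2 - {e2}" using e1 lt acyc by (auto simp: lconf_def lt_def)
  show "\<forall>f\<in>lconf Es G e2 - {e2}. (e1, f) \<notin> G\<^sup>+"
  proof (intro ballI notI)
    fix f assume f: "f \<in> lconf Es G e2 - {e2}" and ef: "(e1, f) \<in> G\<^sup>+"
    have fE: "f \<in> Es" and fe: "(f, e2) \<in> G\<^sup>+" using f by (auto simp: lconf_def lt_def)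
    obtain c where c: "(f, c) \<in> G\<^sup>*" "(c, e2) \<in> G" using trancl_last[OF fe] by blast
    have cC: "c \<in> Cs" using G_E2[OF c(2) e2] .
    have "(f, c) \<in> G\<^sup>+" using rtr_tr[OF c(1)] fE cC CE by blast
    then obtain g where g: "(f, g) \<in> G\<^sup>*" "(g, c) \<in> G" using trancl_last by blast
    have "g \<in> pre_set G (pre G e2)" using g(2) c(2) by (auto simp: pre_set_def pre_def)
    moreover have "(e1, g) \<in> G\<^sup>+" using ef g(1) by (meson trancl_rtrancl_trancl)
    ultimately show False using mx by blast
  qed
qed

lemma tar_max: assumes e1: "e1 \<in> Es" and e2: "e2 \<in> Es" and lt: "(e1, e2) \<in> G\<^sup>+"
  and mx: "\<forall>e'\<in>pre_set G (pre G e2). (e1, e') \<notin> G\<^sup>+"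
  shows "tar T F M0 (h e1) (h e2)"
proof -
  note K = maxK[OF e1 e2 lt mx]
  have "pre F (h e2) \<subseteq> h ` Cut Cs G (lconf Es G e2 - {e2})"
    using prebij[OF e2] image_mono[OF K(5), of h] by (simp add: bij_betw_def)
  then show ?thesis using tar_from_cfg[OF K(1,2,3,4) hE[OF e2]] by simp
qed

lemma co_post: assumes e1: "e1 \<in> Es" and cC: "c \<in> Cs" and co: "co Cs Es G c e1"
  and d: "d \<in> post G e1" and ne: "c \<noteq> d" shows "co Cs Es G c d"
proof -
  note cc = co_E[OF co]
  have ed: "(e1, d) \<in> G" using d by (simp add: post_def)
  have dC: "d \<in> Cs" using G_E[OF ed e1] .
  have "(c, d) \<notin> G\<^sup>+"
  proof
    assume "(c, d) \<in> G\<^sup>+"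
    then have "(c, e1) \<in> G\<^sup>*" using path_into_cond[OF _ ed dC] by blast
    then show False using cc rtr_tr cC e1 CE by blast
  qed
  moreover have "(d, c) \<notin> G\<^sup>+" using cc ed by (meson trancl_into_trancl2)
  moreover have "\<not> conflict Cs G c d"
  proof
    assume "conflict Cs G c d"
    then obtain s t1 t2 where st: "s \<in> Cs" "t1 \<noteq> t2" "(s, t1) \<in> G" "(s, t2) \<in> G"
      "(t1, c) \<in> G\<^sup>*" "(t2, d) \<in> G\<^sup>*" unfolding conflict_def by blast
    have t2E: "t2 \<in> Es" using G_C[OF st(4) st(1)] .
    have "(t2, d) \<in> G\<^sup>+" using rtr_tr[OF st(6)] t2E dC CE by blast
    then have "(t2, e1) \<in> G\<^sup>*" using path_into_cond[OF _ ed dC] by blast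
    then have "conflict Cs G c e1" using conflict_I[OF st(1-5)] by blast
    then show False using cc by simp
  qed
  ultimately show ?thesis using cC dC by (simp add: co_def lt_def)
qed

lemma post_co: assumes e1: "e1 \<in> Es" and d1: "d1 \<in> post G e1" and d2: "d2 \<in> post G e1" and ne: "d1 \<noteq> d2"
  shows "co Cs Es G d1 d2"
proof -
  have ed1: "(e1, d1) \<in> G" and ed2: "(e1, d2) \<in> G" using d1 d2 by (auto simp: post_def)
  have C1: "d1 \<in> Cs" and C2: "d2 \<in> Cs" using G_E e1 ed1 ed2 by auto
  have nlt: "(x, y) \<notin> G\<^sup>+" if "(e1, x) \<in> G" "(e1, y) \<in> G" "x \<in> Cs" "y \<in> Cs" for x y
  proof
    assume "(x, y) \<in> G\<^sup>+"
    then have "(x, e1) \<in> G\<^sup>*" using path_into_cond[OF _ that(2,4)] by blast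
    then have "(e1, e1) \<in> G\<^sup>+" using that(1) by (meson rtrancl_into_trancl2)
    then show False using acyc by simp
  qed
  have "\<not> conflict Cs G d1 d2"
  proof
    assume "conflict Cs G d1 d2"
    then obtain s t1 t2 where st: "s \<in> Cs" "t1 \<noteq> t2" "(s, t1) \<in> G" "(s, t2) \<in> G"
      "(t1, d1) \<in> G\<^sup>*" "(t2, d2) \<in> G\<^sup>*" unfolding conflict_def by blast
    have t1E: "t1 \<in> Es" "t2 \<in> Es" using G_C st by auto
    have "(t1, d1) \<in> G\<^sup>+" using rtr_tr[OF st(5)] t1E C1 CE by blast
    then have "(t1, e1) \<in> G\<^sup>*" using path_into_cond[OF _ ed1 C1] by blast
    moreover have "(t2, d2) \<in> G\<^sup>+" using rtr_tr[OF st(6)] t1E C2 CE by blast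
    then have "(t2, e1) \<in> G\<^sup>*" using path_into_cond[OF _ ed2 C2] by blast
    ultimately have "conflict Cs G e1 e1" using conflict_I[OF st(1-4)] by blast
    then show False using nsc e1 by blast
  qed
  then show ?thesis using nlt[OF ed1 ed2 C1 C2] nlt[OF ed2 ed1 C2 C1] C1 C2 by (simp add: co_def lt_def)
qed

lemma tar_cuts: assumes e1: "e1 \<in> Es" and Y: "finite Y" "Y \<subseteq> Cs"
  and co: "\<forall>x\<in>Y. \<forall>y\<in>Y. x \<noteq> y \<longrightarrow> co Cs Es G x y"
  and pY: "post G e1 \<subseteq> Y" and pne: "post G e1 \<noteq> {}"
  and coe: "\<forall>x\<in>Y - post G e1. co Cs Es G x e1" and t: "t \<in> T" and sub: "pre F t \<subseteq> h ` Y"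
  shows "tar T F M0 (h e1) t"
proof -
  define K where "K = {f\<in>Es. \<exists>y\<in>Y. (f, y) \<in> G\<^sup>*}"
  have "K \<subseteq> (\<Union>y\<in>Y. {f. (f, y) \<in> G\<^sup>+})"
  proof
    fix f assume "f \<in> K"
    then obtain y where "f \<in> Es" "y \<in> Y" "(f, y) \<in> G\<^sup>*" using K_def by blast
    then show "f \<in> (\<Union>y\<in>Y. {f. (f, y) \<in> G\<^sup>+})" using rtr_tr Y(2) CE by blast
  qed
  moreover have "finite (\<Union>y\<in>Y. {f. (f, y) \<in> G\<^sup>+})"
  proof (rule finite_UN_I[OF Y(1)])
    fix y assume "y \<in> Y" then show "finite {f. (f, y) \<in> G\<^sup>+}" using finpast Y(2) by blast
  qed
  ultimately have fK: "finite K" by (rule finite_subset)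
  have cK: "cfg K" unfolding config_def
  proof (intro conjI ballI impI)
    show "K \<subseteq> Es" using K_def by auto
  next
    fix x e' assume "x \<in> K" "e' \<in> Es" "lt G e' x"
    then obtain y where "y \<in> Y" "(x, y) \<in> G\<^sup>*" "(e', x) \<in> G\<^sup>+" unfolding K_def lt_def by blast
    then have "(e', y) \<in> G\<^sup>*" by (meson rtrancl_trans trancl_into_rtrancl)
    then show "e' \<in> K" unfolding K_def using \<open>e' \<in> Es\<close> \<open>y \<in> Y\<close> by blast
  next
    fix x z assume "x \<in> K" "z \<in> K"
    then obtain y1 y2 where y: "y1 \<in> Y" "y2 \<in> Y" "(x, y1) \<in> G\<^sup>*" "(z, y2) \<in> G\<^sup>*" using K_def by blast
    show "\<not> conflict Cs G x z"
    proof
      assume "conflict Cs G x z"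
      then have "conflict Cs G y1 y2" using conflict_mono y by blast
      show False
      proof (cases "y1 = y2")
        case True then show False using nsc[of y1] y(1) Y(2) \<open>conflict Cs G y1 y2\<close> by blast
      next
        case False then show False using co y(1,2) co_E \<open>conflict Cs G y1 y2\<close> by blast
      qed
    qed
  qed
  have YK: "Y \<subseteq> Cut Cs G K"
  proof
    fix y assume y: "y \<in> Y"
    have yC: "y \<in> Cs" using y Y by auto
    have A: "y \<in> Min_conds Cs G \<union> post_set G K"
    proof (cases "pre G y = {}")
      case True then show ?thesis using yC by (simp add: Min_conds_def)
    next
      case False
      then obtain g where g: "(g, y) \<in> G" by (auto simp: pre_def)
      have "g \<in> K" using G_C2[OF g yC] g y K_def by auto
      then show ?thesis using g by (auto simp: post_set_def post_def)
    qed
    have B: "y \<notin> pre_set G K"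
    proof
      assume "y \<in> pre_set G K"
      then obtain f y2 where f: "(y, f) \<in> G" "y2 \<in> Y" "(f, y2) \<in> G\<^sup>*" using K_def by (auto simp: pre_set_def pre_def)
      have yy: "(y, y2) \<in> G\<^sup>+" using f by (meson rtrancl_into_trancl2)
      show False
      proof (cases "y = y2")
        case True then show False using acyc yy by simp
      next
        case False then show False using co y f(2) co_E yy by blast
      qed
    qed
    show "y \<in> Cut Cs G K" using A B by (simp add: Cut_def)
  qed
  obtain d where d: "d \<in> post G e1" using pne by blast
  have e1K: "e1 \<in> K" using d pY e1 K_def by (auto simp: post_def)
  have mx: "\<forall>f\<in>K. (e1, f) \<notin> G\<^sup>+"
  proof (intro ballI notI)
    fix f assume "f \<in> K" and ef: "(e1, f) \<in> G\<^sup>+"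
    then obtain y where f: "f \<in> Es" "y \<in> Y" "(f, y) \<in> G\<^sup>*" using K_def by blast
    have yC: "y \<in> Cs" using f Y by auto
    show False
    proof (cases "y \<in> post G e1")
      case True
      then have ey: "(e1, y) \<in> G" by (simp add: post_def)
      have "(f, y) \<in> G\<^sup>+" using rtr_tr[OF f(3)] f(1) yC CE by blast
      then have "(f, e1) \<in> G\<^sup>*" using path_into_cond[OF _ ey yC] by blast
      then show False using ef acyc by (meson trancl_rtrancl_trancl)
    next
      case False
      then have "co Cs Es G y e1" using coe f(2) by blast
      moreover have "(e1, y) \<in> G\<^sup>+" using ef f(3) by (meson trancl_rtrancl_trancl)
      ultimately show False using co_E by blast
    qed
  qed
  show ?thesis using tar_from_cfg[OF fK cK e1K mx t] sub YK by blast
qed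

end


context unf begin

lemma img_cut_step: assumes K: "cfg K" and f: "f \<in> K" and mx: "\<forall>g\<in>K. (f, g) \<notin> G\<^sup>+"
  and inj: "inj_on h (Cut Cs G (K - {f}))"
  shows "h ` Cut Cs G K = (h ` Cut Cs G (K - {f}) - h ` pre G f) \<union> h ` post G f"
proof -
  have pf: "pre G f \<subseteq> Cut Cs G (K - {f})" using rm_max_pre[OF K f mx] .
  have "h ` (Cut Cs G (K - {f}) - pre G f) = h ` Cut Cs G (K - {f}) - h ` pre G f"
    using inj_on_image_set_diff[OF inj _ pf] by simp
  then show ?thesis using rm_max_cut[OF K f mx] by (simp add: image_Un)
qed

lemma post_in_cut: assumes K: "cfg K" and e: "e \<in> K" and d: "post G e \<inter> pre_set G K = {}"
  shows "post G e \<subseteq> Cut Cs G K"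
  using e d by (auto simp: Cut_def post_set_def)

lemma cut_inv: assumes e1': "e1' \<in> Es" and A: "A = h ` post G e1'"
  and base1: "ind ((h ` Cut Cs G (lconf Es G e1') - A) \<union> Bp) \<in> reach T F M0"
  and base2: "h ` Cut Cs G (lconf Es G e1') \<inter> (Bp - A) = {}"
  shows "card (K - lconf Es G e1') = n \<Longrightarrow> finite K \<Longrightarrow> cfg K \<Longrightarrow> lconf Es G e1' \<subseteq> K \<Longrightarrow>
    post G e1' \<inter> pre_set G K = {} \<Longrightarrow>
    ind ((h ` Cut Cs G K - A) \<union> Bp) \<in> reach T F M0 \<and> h ` Cut Cs G K \<inter> (Bp - A) = {} \<and> A \<subseteq> h ` Cut Cs G K"
proof (induction n arbitrary: K)
  case 0
  have "K = lconf Es G e1'" using 0 by auto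
  moreover have "A \<subseteq> h ` Cut Cs G K"
    using post_in_cut[OF 0(3) _ 0(5)] lconf_cfg(3)[OF e1'] 0(4) A by blast
  ultimately show ?case using base1 base2 by simp
next
  case (Suc m)
  define L where "L = lconf Es G e1'"
  have cL: "cfg L" using lconf_cfg[OF e1'] L_def by simp
  have e1'L: "e1' \<in> L" using lconf_cfg(3)[OF e1'] L_def by simp
  have ne: "K - L \<noteq> {}"
  proof
    assume a: "K - L = {}" have "card (K - L) = 0" unfolding a by simp
    then show False using Suc(2) L_def by simp
  qed
  obtain f where f0: "f \<in> K - L" and fm0: "\<forall>g\<in>K - L. (f, g) \<notin> G\<^sup>+"
    using finite_max[of "K - L"] ne Suc(3) by blast
  have fK: "f \<in> K" and fL: "f \<notin> L" using f0 by auto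
  have fE: "f \<in> Es" using fK cfg_sub[OF Suc(4)] by auto
  have mx: "\<forall>g\<in>K. (f, g) \<notin> G\<^sup>+"
  proof (intro ballI notI)
    fix g assume g: "g \<in> K" and fg: "(f, g) \<in> G\<^sup>+"
    show False
    proof (cases "g \<in> L")
      case True then show False using cfg_down[OF cL True fE fg] fL by simp
    next
      case False then show False using fm0 g fg by blast
    qed
  qed
  define K' where "K' = K - {f}"
  have cK': "cfg K'" using rm_max_cfg[OF Suc(4) fK mx] K'_def by simp
  have fK': "finite K'" using Suc(3) K'_def by simp
  have LK': "L \<subseteq> K'" using Suc(5) fL K'_def L_def by auto
  have psK': "pre_set G K' \<subseteq> pre_set G K" using K'_def by (auto simp: pre_set_def)
  have dK': "post G e1' \<inter> pre_set G K' = {}" using Suc(6) psK' by blast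
  have cardK': "card (K' - L) = m"
  proof -
    have "K' - L = (K - L) - {f}" using K'_def by auto
    then show ?thesis using Suc(2) f0 Suc(3) L_def by simp
  qed
  have IH: "ind ((h ` Cut Cs G K' - A) \<union> Bp) \<in> reach T F M0" "h ` Cut Cs G K' \<inter> (Bp - A) = {}"
    "A \<subseteq> h ` Cut Cs G K'"
    using Suc.IH[OF cardK'[unfolded L_def] fK' cK' LK'[unfolded L_def] dK'] by auto
  define S' where "S' = h ` Cut Cs G K'"
  define S where "S = h ` Cut Cs G K"
  define Bf where "Bf = pre F (h f)"
  define Af where "Af = post F (h f)"
  have Bf: "Bf = h ` pre G f" using prebij[OF fE] Bf_def by (simp add: bij_betw_def)
  have Af: "Af = h ` post G f" using postbij[OF fE] Af_def by (simp add: bij_betw_def)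
  have injK': "inj_on h (Cut Cs G K')" using cfg_marking[OF fK' cK'] by blast
  have injK: "inj_on h (Cut Cs G K)" using cfg_marking[OF Suc(3,4)] by blast
  have SS: "S = (S' - Bf) \<union> Af"
    using img_cut_step[OF Suc(4) fK mx] injK' K'_def S_def S'_def Bf Af by simp
  have pf: "pre G f \<subseteq> Cut Cs G K'" using rm_max_pre[OF Suc(4) fK mx] K'_def by simp
  have e1'K': "e1' \<in> K'" using e1'L LK' by auto
  have pK': "post G e1' \<subseteq> Cut Cs G K'" using post_in_cut[OF cK' e1'K' dK'] .
  have pK: "post G e1' \<subseteq> Cut Cs G K" using post_in_cut[OF Suc(4) _ Suc(6)] e1'K' K'_def by auto
  have pfe: "pre G f \<inter> post G e1' = {}" using Suc(6) fK by (auto simp: pre_set_def)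
  have BfA: "Bf \<inter> A = {}"
  proof -
    { fix p assume "p \<in> Bf" "p \<in> A"
      then obtain c d where "c \<in> pre G f" "d \<in> post G e1'" "h c = h d" using Bf A by auto
      then have "c = d" using injK' pf pK' by (meson inj_onD subsetD)
      then have False using pfe \<open>c \<in> pre G f\<close> \<open>d \<in> post G e1'\<close> by blast }
    then show ?thesis by blast
  qed
  have pfK: "post G f \<subseteq> Cut Cs G K" using rm_max_cut[OF Suc(4) fK mx] by blast
  have fe1': "f \<noteq> e1'" using fL e1'L by auto
  have AfA: "Af \<inter> A = {}"
  proof -
    { fix p assume "p \<in> Af" "p \<in> A"
      then obtain c d where c: "c \<in> post G f" "d \<in> post G e1'" "h c = h d" using Af A by auto
      then have "c = d" using injK pfK pK by (meson inj_onD subsetD)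
      moreover have "c \<in> Cs" using c(1) post_Cs[OF fE] by auto
      ultimately have "f = e1'" using uniq c by (auto simp: post_def)
      then have False using fe1' by simp }
    then show ?thesis by blast
  qed
  have BfS: "Bf \<subseteq> S' - A" using Bf pf S'_def BfA by blast
  have BfBp: "Bf \<inter> Bp = {}" using BfS IH(2) S'_def by blast
  define X where "X = (S' - A) \<union> Bp"
  have en: "enabled T F (ind X) (h f)"
    unfolding enabled_def using hE[OF fE] BfS X_def Bf_def by auto
  define N'' where "N'' = fire F (ind X) (h f)"
  have R: "N'' \<in> reach T F M0" unfolding N''_def using reach_step[OF IH(1)[folded S'_def, folded X_def] en] .
  have sf: "N'' p \<le> 1" for p using safeM[OF R] .
  have val: "N'' p = ind X p - (if p \<in> Bf then 1 else 0) + (if p \<in> Af then 1 else 0)" for p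
    unfolding N''_def fire_def Bf_def Af_def by simp
  have eq: "N'' = ind ((S - A) \<union> Bp)"
  proof
    fix p
    have s: "N'' p \<le> 1" by (rule sf)
    show "N'' p = ind ((S - A) \<union> Bp) p"
      using s unfolding val SS X_def using BfS BfBp AfA by (auto split: if_splits)
  qed
  have d2: "S \<inter> (Bp - A) = {}"
  proof -
    { fix p assume p: "p \<in> S" "p \<in> Bp" "p \<notin> A"
      have "p \<notin> Bf" using p BfBp by blast
      from p SS consider "p \<in> S' - Bf" | "p \<in> Af" by blast
      then have False
      proof cases
        case 1 then show False using IH(2) p S'_def by blast
      next
        case 2
        have "N'' p = 2" unfolding val X_def using 2 p \<open>p \<notin> Bf\<close> by simp
        then show False using sf[of p] by simp
      qed }
    then show ?thesis by blast
  qed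
  have "A \<subseteq> S" using pK A S_def by blast
  then show ?case using R eq d2 S_def by simp
qed

lemma tar_cutoff:
  assumes e1: "e1 \<in> Es" and e1': "e1' \<in> Es" and e2: "e2 \<in> Es"
    and mk: "h ` Cut Cs G (lconf Es G e1) = h ` Cut Cs G (lconf Es G e1')"
    and ps: "h ` post G e1' = h ` post G e1"
    and lt: "(e1', e2) \<in> G\<^sup>+" and mx: "\<forall>e'\<in>pre_set G (pre G e2). (e1', e') \<notin> G\<^sup>+"
  shows "tar T F M0 (h e1) (h e2)"
proof -
  define t1 where "t1 = h e1"
  define A where "A = post F t1"
  define Bp where "Bp = pre F t1"
  have hA: "A = h ` post G e1'" using postbij[OF e1] ps A_def t1_def by (simp add: bij_betw_def)
  have hB: "Bp = h ` pre G e1" using prebij[OF e1] Bp_def t1_def by (simp add: bij_betw_def)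
  have hA1: "A = h ` post G e1" using postbij[OF e1] A_def t1_def by (simp add: bij_betw_def)
  note L1 = lconf_cfg[OF e1]
  have m1: "\<forall>f\<in>lconf Es G e1. (e1, f) \<notin> G\<^sup>+" using lconf_max[OF e1] by blast
  define K1 where "K1 = lconf Es G e1 - {e1}"
  have cK1: "cfg K1" using rm_max_cfg[OF L1(1) L1(3) m1] K1_def by simp
  have fK1: "finite K1" using L1(2) K1_def by simp
  have pe1: "pre G e1 \<subseteq> Cut Cs G K1" using rm_max_pre[OF L1(1) L1(3) m1] K1_def by simp
  have mK1: "inj_on h (Cut Cs G K1)" "ind (h ` Cut Cs G K1) \<in> reach T F M0"
    using cfg_marking[OF fK1 cK1] by auto
  define Pre1 where "Pre1 = h ` Cut Cs G K1"
  define Q where "Q = h ` Cut Cs G (lconf Es G e1)"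
  have QQ: "Q = (Pre1 - Bp) \<union> A"
    using img_cut_step[OF L1(1) L1(3) m1] mK1(1) K1_def Q_def Pre1_def hB hA1 by simp
  have BpP: "Bp \<subseteq> Pre1" using pe1 hB Pre1_def by blast
  have en1: "enabled T F (ind Pre1) t1" using fire_step(1)[OF cK1 e1 pe1 mK1] Pre1_def t1_def by simp
  have R1: "fire F (ind Pre1) t1 \<in> reach T F M0" using reach_step[OF mK1(2)[folded Pre1_def] en1] .
  have PA: "Pre1 \<inter> (A - Bp) = {}"
  proof -
    { fix p assume p: "p \<in> Pre1" "p \<in> A" "p \<notin> Bp"
      have "fire F (ind Pre1) t1 p = 2" using p unfolding fire_def A_def Bp_def by simp
      then have False using safeM[OF R1, of p] by simp }
    then show ?thesis by blast
  qed
  have Q': "Q = h ` Cut Cs G (lconf Es G e1')" using mk Q_def by simp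
  have base1: "ind ((h ` Cut Cs G (lconf Es G e1') - A) \<union> Bp) \<in> reach T F M0"
  proof -
    have "(Q - A) \<union> Bp = Pre1" using QQ BpP PA by blast
    then show ?thesis using mK1(2) Pre1_def Q' by simp
  qed
  have base2: "h ` Cut Cs G (lconf Es G e1') \<inter> (Bp - A) = {}" using QQ Q' by blast
  note K = maxK[OF e1' e2 lt mx]
  define K where "K = lconf Es G e2 - {e2}"
  have LK: "lconf Es G e1' \<subseteq> K" using lconf_sub[OF K(2) K(3)] K_def by simp
  have dK: "post G e1' \<inter> pre_set G K = {}"
  proof -
    { fix d f assume "d \<in> post G e1'" "f \<in> K" "d \<in> pre G f"
      then have "(e1', f) \<in> G\<^sup>+" by (auto simp: post_def pre_def)
      then have False using K(4) \<open>f \<in> K\<close> K_def by blast }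
    then show ?thesis by (auto simp: pre_set_def)
  qed
  have inv: "ind ((h ` Cut Cs G K - A) \<union> Bp) \<in> reach T F M0" "h ` Cut Cs G K \<inter> (Bp - A) = {}"
    "A \<subseteq> h ` Cut Cs G K"
    using cut_inv[OF e1' hA base1 base2 refl _ _ LK dK] K(1,2) K_def by auto
  define S where "S = h ` Cut Cs G K"
  define N where "N = ind ((S - A) \<union> Bp)"
  have en: "enabled T F N t1" unfolding enabled_def N_def using hE[OF e1] t1_def Bp_def by auto
  have fr: "fire F N t1 = ind S"
  proof
    fix p show "fire F N t1 p = ind S p"
      unfolding fire_def N_def using inv S_def A_def Bp_def by auto
  qed
  have "pre F (h e2) \<subseteq> S" using prebij[OF e2] image_mono[OF K(5), of h] S_def K_def by (simp add: bij_betw_def)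
  then have en2: "enabled T F (fire F N t1) (h e2)" using fr hE[OF e2] by (auto simp: enabled_def)
  have "N \<in> reach T F M0" using inv(1) N_def S_def by simp
  then show ?thesis unfolding tar_def using en en2 t1_def by blast
qed

end



lemma zorn_pco: assumes X0: "X0 \<subseteq> B" "pairwise_co Cp Ep Gp X0"
  shows "\<exists>X'. X0 \<subseteq> X' \<and> X' \<subseteq> B \<and> pairwise_co Cp Ep Gp X' \<and>
     (\<forall>Y. X' \<subset> Y \<and> Y \<subseteq> B \<longrightarrow> \<not> pairwise_co Cp Ep Gp Y)"
proof -
  define A where "A = {Y. X0 \<subseteq> Y \<and> Y \<subseteq> B \<and> pairwise_co Cp Ep Gp Y}"
  have "X0 \<in> A" using X0 A_def by simp
  then have ne: "A \<noteq> {}" by blast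
  have ch: "\<Union>C \<in> A" if "C \<noteq> {}" "subset.chain A C" for C
  proof -
    have CA: "C \<subseteq> A" and cc: "\<forall>X\<in>C. \<forall>Y\<in>C. X \<subseteq> Y \<or> Y \<subseteq> X" using that(2) by (auto simp: subset_chain_def)
    have "X0 \<subseteq> \<Union>C" using that(1) CA A_def by blast
    moreover have "\<Union>C \<subseteq> B" using CA A_def by blast
    moreover have "pairwise_co Cp Ep Gp (\<Union>C)" unfolding pairwise_co_def
    proof (intro ballI impI)
      fix x y assume x: "x \<in> \<Union>C" and y: "y \<in> \<Union>C" and xy: "x \<noteq> y"
      then obtain Y1 Y2 where Y: "Y1 \<in> C" "Y2 \<in> C" "x \<in> Y1" "y \<in> Y2" by blast
      then have "(x \<in> Y2 \<and> y \<in> Y2 \<and> Y2 \<in> C) \<or> (x \<in> Y1 \<and> y \<in> Y1 \<and> Y1 \<in> C)" using cc by blast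
      then show "co Cp Ep Gp x y" using CA A_def xy unfolding pairwise_co_def by blast
    qed
    ultimately show ?thesis using A_def by simp
  qed
  obtain M where M: "M \<in> A" "\<forall>X\<in>A. M \<subseteq> X \<longrightarrow> X = M" using subset_Zorn_nonempty[OF ne ch] by blast
  show ?thesis
  proof (intro exI[of _ M] conjI allI impI)
    show "X0 \<subseteq> M" "M \<subseteq> B" "pairwise_co Cp Ep Gp M" using M(1) A_def by auto
    fix Y assume Y: "M \<subset> Y \<and> Y \<subseteq> B"
    show "\<not> pairwise_co Cp Ep Gp Y"
    proof
      assume "pairwise_co Cp Ep Gp Y"
      then have "Y \<in> A" using Y M(1) A_def by auto
      then show False using M(2) Y by blast
    qed
  qed
qed

context unf begin

lemma co_sym: "co Cs Es G x y \<Longrightarrow> co Cs Es G y x"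
  using conflict_sym by (auto simp: co_def)

lemma co_ext: assumes C: "cfg C" and e1: "e1 \<in> Es" and e2: "e2 \<in> Es"
  and p1: "pre G e1 \<subseteq> Cut Cs G C" and p2: "pre G e2 \<subseteq> Cut Cs G C"
  and d: "pre G e1 \<inter> pre G e2 = {}" and ne: "e1 \<noteq> e2"
  shows "co Cs Es G e1 e2"
proof -
  have n1: "e1 \<notin> C" using ext_notin[OF C e1 p1] .
  have n2: "e2 \<notin> C" using ext_notin[OF C e2 p2] .
  have "(e1, e2) \<notin> G\<^sup>+" using ext_past[OF C e2 p2 _ e1] n1 by blast
  moreover have "(e2, e1) \<notin> G\<^sup>+" using ext_past[OF C e1 p1 _ e2] n2 by blast
  moreover have "\<not> conflict Cs G e1 e2"
  proof
    assume "conflict Cs G e1 e2"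
    then obtain s t1 t2 where st: "s \<in> Cs" "t1 \<noteq> t2" "(s, t1) \<in> G" "(s, t2) \<in> G"
      "(t1, e1) \<in> G\<^sup>*" "(t2, e2) \<in> G\<^sup>*" unfolding conflict_def by blast
    have t1E: "t1 \<in> Es" and t2E: "t2 \<in> Es" using G_C st by auto
    have t1C: "t1 = e1 \<or> t1 \<in> C" using ext_past[OF C e1 p1 _ t1E] rtr_tr[OF st(5)] by blast
    have t2C: "t2 = e2 \<or> t2 \<in> C" using ext_past[OF C e2 p2 _ t2E] rtr_tr[OF st(6)] by blast
    have s1: "s \<in> pre G t1" and s2: "s \<in> pre G t2" using st by (auto simp: pre_def)
    show False
    proof (cases "t1 = e1")
      case True
      then have sc: "s \<in> Cut Cs G C" using p1 s1 by auto
      show False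
      proof (cases "t2 = e2")
        case True then show False using d s1 s2 \<open>t1 = e1\<close> by blast
      next
        case False then show False using t2C cut_notpre[OF sc _ s2] by blast
      qed
    next
      case False
      then have t1C': "t1 \<in> C" using t1C by simp
      show False
      proof (cases "t2 = e2")
        case True
        then have sc: "s \<in> Cut Cs G C" using p2 s2 by auto
        then show False using cut_notpre[OF sc t1C' s1] by blast
      next
        case False
        then have "t2 \<in> C" using t2C by simp
        then show False using cfg_nc[OF C t1C'] conflict_I[OF st(1-4)] by blast
      qed
    qed
  qed
  ultimately show ?thesis using e1 e2 by (simp add: co_def lt_def)
qed

lemma co_cut_ext: assumes C: "cfg C" and e1: "e1 \<in> Es" and p1: "pre G e1 \<subseteq> Cut Cs G C"
  and c: "c \<in> Cut Cs G C" and cn: "c \<notin> pre G e1"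
  shows "co Cs Es G c e1"
proof -
  have cC: "c \<in> Cs" using cut_Cs[OF C] c by auto
  have n1: "e1 \<notin> C" using ext_notin[OF C e1 p1] .
  have "(c, e1) \<notin> G\<^sup>+"
  proof
    assume "(c, e1) \<in> G\<^sup>+"
    then obtain f where f: "(c, f) \<in> G" "(f, e1) \<in> G\<^sup>*" using trancl_first by blast
    have fE: "f \<in> Es" using G_C[OF f(1) cC] .
    show False
    proof (cases "f = e1")
      case True then show False using cn f(1) by (simp add: pre_def)
    next
      case False
      then have "f \<in> C" using ext_past[OF C e1 p1 _ fE] rtr_tr[OF f(2)] by blast
      then show False using cut_notpre[OF c _] f(1) by (auto simp: pre_def)
    qed
  qed
  moreover have "(e1, c) \<notin> G\<^sup>+" using cut_pred[OF C c _ e1] n1 by blast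
  moreover have "\<not> conflict Cs G c e1"
  proof
    assume "conflict Cs G c e1"
    then obtain s t1 t2 where st: "s \<in> Cs" "t1 \<noteq> t2" "(s, t1) \<in> G" "(s, t2) \<in> G"
      "(t1, c) \<in> G\<^sup>*" "(t2, e1) \<in> G\<^sup>*" unfolding conflict_def by blast
    have t1E: "t1 \<in> Es" and t2E: "t2 \<in> Es" using G_C st by auto
    have "(t1, c) \<in> G\<^sup>+" using rtr_tr[OF st(5)] t1E cC CE by blast
    then have t1C: "t1 \<in> C" using cut_pred[OF C c _ t1E] by blast
    have s1: "s \<in> pre G t1" and s2: "s \<in> pre G t2" using st by (auto simp: pre_def)
    show False
    proof (cases "t2 = e1")
      case True
      then have "s \<in> Cut Cs G C" using p1 s2 by auto
      then show False using cut_notpre[OF _ t1C s1] by blast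
    next
      case False
      then have "t2 \<in> C" using ext_past[OF C e1 p1 _ t2E] rtr_tr[OF st(6)] by blast
      then show False using cfg_nc[OF C t1C] conflict_I[OF st(1-4)] by blast
    qed
  qed
  ultimately show ?thesis using cC e1 by (simp add: co_def lt_def)
qed

lemma cutoff_Es: "cutoff Cs Es G h prec e \<Longrightarrow> e \<in> Es"
  by (auto simp: cutoff_def corresponding_def)

lemma nc_ext: assumes C: "cfg C" and nc: "\<forall>e\<in>C. \<not> cutoff Cs Es G h prec e"
  and e: "e \<in> Es" and pe: "pre G e \<subseteq> Cut Cs G C"
  shows "\<forall>f\<in>insert e C. \<forall>e'. (e', f) \<in> G\<^sup>+ \<longrightarrow> \<not> cutoff Cs Es G h prec e'"
proof (intro ballI allI impI notI)
  fix f e' assume f: "f \<in> insert e C" and ef: "(e', f) \<in> G\<^sup>+" and co: "cutoff Cs Es G h prec e'"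
  have e'E: "e' \<in> Es" using cutoff_Es[OF co] .
  have "e' \<in> C" using f ef ext_past[OF C e pe _ e'E] cfg_down[OF C _ e'E] by blast
  then show False using nc co by blast
qed

lemma cut_sub_PN: assumes C: "cfg C" and nc: "\<forall>e\<in>C. \<not> cutoff Cs Es G h prec e"
  and e: "e \<in> Es" and pe: "pre G e \<subseteq> Cut Cs G C"
  shows "insert e C \<subseteq> PN prec" "Cut Cs G (insert e C) \<subseteq> PN prec" "Cut Cs G C \<subseteq> PN prec"
proof -
  have W: "insert e C \<union> Min_conds Cs G \<union> post_set G (insert e C) \<subseteq> PN prec"
    using PN_witness[OF ext_cfg[OF C e pe] nc_ext[OF C nc e pe]] .
  then show "insert e C \<subseteq> PN prec" by blast
  show "Cut Cs G (insert e C) \<subseteq> PN prec" using W by (auto simp: Cut_def)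
  have "Cut Cs G C \<subseteq> Min_conds Cs G \<union> post_set G (insert e C)" by (auto simp: Cut_def post_set_def)
  then show "Cut Cs G C \<subseteq> PN prec" using W by blast
qed

end


context unf begin

lemma complete_tar: assumes adeq: "adequate_order Cs Es G h prec" and t1: "t1 \<in> T" and t2: "t2 \<in> T"
  and tr: "tar T F M0 t1 t2"
  shows "(t1, t2) \<in> improved T F Cs Es G h prec"
proof -
  obtain Ms where Ms: "Ms \<in> reach T F M0" "enabled T F Ms t1" "enabled T F (fire F Ms t1) t2"
    using tr by (auto simp: tar_def)
  obtain K0 where K0: "finite K0" "cfg K0" "Ms = ind (h ` Cut Cs G K0)" using reach_cfg[OF Ms(1)] by blast
  obtain C where C: "finite C" "cfg C" "h ` Cut Cs G C = h ` Cut Cs G K0" "\<forall>e\<in>C. \<not> cutoff Cs Es G h prec e"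
    using complete_prefix[OF adeq K0(1,2)] by blast
  have MsC: "Ms = ind (h ` Cut Cs G C)" using K0(3) C(3) by simp
  have injC: "inj_on h (Cut Cs G C)" "ind (h ` Cut Cs G C) \<in> reach T F M0" using cfg_marking[OF C(1,2)] by auto
  have sub1: "pre F t1 \<subseteq> h ` Cut Cs G C"
  proof
    fix p assume "p \<in> pre F t1" then have "Ms p \<ge> 1" using Ms(2) by (simp add: enabled_def)
    then show "p \<in> h ` Cut Cs G C" using MsC by (simp split: if_splits)
  qed
  obtain e1 where e1: "e1 \<in> Es" "h e1 = t1" "pre G e1 = Cut Cs G C \<inter> h -` pre F t1"
    using ext_exists[OF C(2) injC(1) t1 sub1] by blast
  have pe1: "pre G e1 \<subseteq> Cut Cs G C" using e1(3) by blast
  define K where "K = insert e1 C"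
  note fs = fire_step[OF C(2) e1(1) pe1 injC]
  have fireK: "fire F Ms t1 = ind (h ` Cut Cs G K)" using fs(2) MsC e1(2) K_def by simp
  have cutK: "Cut Cs G K = (Cut Cs G C - pre G e1) \<union> post G e1" using ext_cut[OF C(2) e1(1) pe1] K_def by simp
  note PNs = cut_sub_PN[OF C(2) C(4) e1(1) pe1]
  have e1P: "e1 \<in> PN prec" using PNs(1) by blast
  have cK: "cfg K" using ext_cfg[OF C(2) e1(1) pe1] K_def by simp
  have sub2: "pre F t2 \<subseteq> h ` Cut Cs G K"
  proof
    fix p assume "p \<in> pre F t2" then have "fire F Ms t1 p \<ge> 1" using Ms(3) by (simp add: enabled_def)
    then show "p \<in> h ` Cut Cs G K" using fireK by (simp split: if_splits)
  qed
  have post1: "post F t1 = h ` post G e1" using postbij[OF e1(1)] e1(2) by (simp add: bij_betw_def)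
  show ?thesis
  proof (cases "t2 \<in> post_set F (post F t1)")
    case True
    define Cp where "Cp = Cs \<inter> PN prec"
    define Ep where "Ep = Es \<inter> PN prec"
    define Bprec where "Bprec = post (Gp prec) e1 \<union> {c\<in>Cp. co Cp Ep (Gp prec) c e1 \<and> h c \<in> pre F t2}"
    define X0 where "X0 = post G e1 \<union> {c\<in>Cut Cs G K. h c \<in> pre F t2}"
    have X0K: "X0 \<subseteq> Cut Cs G K" using cutK X0_def by blast
    have X0P: "X0 \<subseteq> PN prec" using X0K PNs(2) K_def by blast
    have pco: "pairwise_co Cp Ep (Gp prec) X0" unfolding pairwise_co_def Cp_def Ep_def
    proof (intro ballI impI)
      fix x y assume x: "x \<in> X0" and y: "y \<in> X0" and xy: "x \<noteq> y"
      have "co Cs Es G x y" using cut_co[OF cK] X0K x y xy by blast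
      then show "co (Cs \<inter> PN prec) (Es \<inter> PN prec) (Gp prec) x y" using co_PN X0P x y by blast
    qed
    have X0B: "X0 \<subseteq> Bprec"
    proof
      fix c assume c: "c \<in> X0"
      show "c \<in> Bprec"
      proof (cases "c \<in> post G e1")
        case True then show ?thesis using post_PN[OF e1P e1(1)] Bprec_def by simp
      next
        case False
        then have cc: "c \<in> Cut Cs G K" "h c \<in> pre F t2" using c X0_def by auto
        then have "c \<in> Cut Cs G C" "c \<notin> pre G e1" using cutK False by auto
        then have "co Cs Es G c e1" using co_cut_ext[OF C(2) e1(1) pe1] by blast
        then have "co Cp Ep (Gp prec) c e1" using co_PN[OF _ e1P] X0P c Cp_def Ep_def by blast
        moreover have "c \<in> Cp" using X0P c cut_Cs[OF cK] cc Cp_def by blast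
        ultimately show ?thesis using cc Bprec_def by simp
      qed
    qed
    obtain X' where X': "X0 \<subseteq> X'" "X' \<subseteq> Bprec" "pairwise_co Cp Ep (Gp prec) X'"
      "\<forall>Y. X' \<subset> Y \<and> Y \<subseteq> Bprec \<longrightarrow> \<not> pairwise_co Cp Ep (Gp prec) Y"
      using zorn_pco[OF X0B pco] by blast
    have "pre F t2 \<subseteq> h ` X0"
    proof
      fix p assume "p \<in> pre F t2"
      then obtain c where "c \<in> Cut Cs G K" "p = h c" using sub2 by blast
      then show "p \<in> h ` X0" using \<open>p \<in> pre F t2\<close> X0_def by blast
    qed
    then have "pre F t2 \<subseteq> h ` X'" using X'(1) by blast
    then have "check_by_cuts F h Cp Ep (Gp prec) t1 t2"
      unfolding check_by_cuts_def Let_def using X' e1P e1 Ep_def Bprec_def by blast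
    then show ?thesis unfolding improved_def Let_def using True t1 Cp_def Ep_def by blast
  next
    case False
    have disj: "pre F t2 \<inter> post F t1 = {}"
    proof -
      { fix p assume "p \<in> pre F t2" "p \<in> post F t1"
        then have "t2 \<in> post_set F (post F t1)" by (auto simp: pre_def post_def post_set_def)
        then have False using False by simp }
      then show ?thesis by blast
    qed
    have sub3: "pre F t2 \<subseteq> h ` (Cut Cs G C - pre G e1)"
      using sub2 cutK disj post1 by (auto simp: image_Un)
    have sub3': "pre F t2 \<subseteq> h ` Cut Cs G C" using sub3 by blast
    obtain e2 where e2: "e2 \<in> Es" "h e2 = t2" "pre G e2 = Cut Cs G C \<inter> h -` pre F t2"
      using ext_exists[OF C(2) injC(1) t2 sub3'] by blast
    have pe2: "pre G e2 \<subseteq> Cut Cs G C" using e2(3) by blast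
    have d: "pre G e1 \<inter> pre G e2 = {}"
    proof -
      { fix c assume c: "c \<in> pre G e1" "c \<in> pre G e2"
        then have "h c \<in> pre F t2" using e2(3) by blast
        then obtain c' where "c' \<in> Cut Cs G C - pre G e1" "h c' = h c" using sub3 by force
        then have "c' = c" using injC(1) pe1 c(1) by (meson Diff_iff inj_onD subsetD)
        then have False using c \<open>c' \<in> Cut Cs G C - pre G e1\<close> by blast }
      then show ?thesis by blast
    qed
    have ne: "e1 \<noteq> e2" using d pre_ne[OF e1(1)] by auto
    have co: "co Cs Es G e1 e2" using co_ext[OF C(2) e1(1) e2(1) pe1 pe2 d ne] .
    have e2P: "e2 \<in> PN prec" using cut_sub_PN(1)[OF C(2) C(4) e2(1) pe2] by blast
    have "co (Cs \<inter> PN prec) (Es \<inter> PN prec) (Gp prec) e1 e2" using co_PN[OF e1P e2P] co by simp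
    then show ?thesis unfolding improved_def Let_def using e1 e2 e1P e2P ne by blast
  qed
qed

end


context unf begin

lemma sound_early: assumes ec: "early_confirm Cs Es G h prec (Es \<inter> PN prec) (Gp prec) t1 t2"
  shows "tar T F M0 t1 t2"
proof -
  obtain e1 where e1: "e1 \<in> Es" "e1 \<in> PN prec" "h e1 = t1" and
    alt: "(\<exists>e2\<in>Es \<inter> PN prec. h e2 = t2 \<and> max_adj (Gp prec) e1 e2) \<or>
         (\<exists>e1'\<in>Es \<inter> PN prec. corresponding Cs Es G h prec e1 e1' \<and>
              h ` post (Gp prec) e1' = h ` post (Gp prec) e1 \<and>
              (\<exists>e2\<in>Es \<inter> PN prec. h e2 = t2 \<and> max_adj (Gp prec) e1' e2))"
    using ec unfolding early_confirm_def by blast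
  from alt show ?thesis
  proof
    assume "\<exists>e2\<in>Es \<inter> PN prec. h e2 = t2 \<and> max_adj (Gp prec) e1 e2"
    then obtain e2 where e2: "e2 \<in> Es" "e2 \<in> PN prec" "h e2 = t2" "max_adj (Gp prec) e1 e2" by blast
    have m: "(e1, e2) \<in> G\<^sup>+ \<and> (\<forall>e'\<in>pre_set G (pre G e2). (e1, e') \<notin> G\<^sup>+)"
      using max_adj_PN[OF e1(2) e2(2) e2(4)] .
    show ?thesis using tar_max[OF e1(1) e2(1)] m e1(3) e2(3) by blast
  next
    assume "\<exists>e1'\<in>Es \<inter> PN prec. corresponding Cs Es G h prec e1 e1' \<and>
              h ` post (Gp prec) e1' = h ` post (Gp prec) e1 \<and>
              (\<exists>e2\<in>Es \<inter> PN prec. h e2 = t2 \<and> max_adj (Gp prec) e1' e2)"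
    then obtain e1' e2 where e1': "e1' \<in> Es" "e1' \<in> PN prec" "corresponding Cs Es G h prec e1 e1'"
      "h ` post (Gp prec) e1' = h ` post (Gp prec) e1"
      and e2: "e2 \<in> Es" "e2 \<in> PN prec" "h e2 = t2" "max_adj (Gp prec) e1' e2" by blast
    have m: "(e1', e2) \<in> G\<^sup>+ \<and> (\<forall>e'\<in>pre_set G (pre G e2). (e1', e') \<notin> G\<^sup>+)"
      using max_adj_PN[OF e1'(2) e2(2) e2(4)] .
    have mk: "h ` Cut Cs G (lconf Es G e1) = h ` Cut Cs G (lconf Es G e1')"
      using e1'(3) by (simp add: corresponding_def Mark_def)
    have ps: "h ` post G e1' = h ` post G e1" using e1'(4) post_PN[OF e1'(2,1)] post_PN[OF e1(2,1)] by simp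
    show ?thesis using tar_cutoff[OF e1(1) e1'(1) e2(1) mk ps] m e1(3) e2(3) by blast
  qed
qed

lemma finP_sub: "A \<subseteq> P \<Longrightarrow> finite A" using finP finite_subset by blast

lemma preF_P: "t \<in> T \<Longrightarrow> pre F t \<subseteq> P" using Fsub PT by (auto simp: pre_def)
lemma postF_P: "t \<in> T \<Longrightarrow> post F t \<subseteq> P" using Fsub PT by (auto simp: post_def)

lemma sound_cuts: assumes cb: "check_by_cuts F h (Cs \<inter> PN prec) (Es \<inter> PN prec) (Gp prec) t1 t2"
  and t2: "t2 \<in> T" and pne: "post F t1 \<noteq> {}"
  shows "tar T F M0 t1 t2"
proof -
  define Cp where "Cp = Cs \<inter> PN prec"
  define Ep where "Ep = Es \<inter> PN prec"
  obtain e1 X' where e1: "e1 \<in> Es" "e1 \<in> PN prec" "h e1 = t1"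
    and X': "X' \<subseteq> post (Gp prec) e1 \<union> {c\<in>Cp. co Cp Ep (Gp prec) c e1 \<and> h c \<in> pre F t2}"
       "pairwise_co Cp Ep (Gp prec) X'" "pre F t2 \<subseteq> h ` X'"
    using cb unfolding check_by_cuts_def Let_def Cp_def Ep_def by blast
  have pG: "post (Gp prec) e1 = post G e1" using post_PN[OF e1(2,1)] .
  have X'P: "X' \<subseteq> PN prec" using X' pG PN_post[OF e1(2,1)] Cp_def by blast
  have X'C: "X' \<subseteq> Cs" using X' pG post_Cs[OF e1(1)] Cp_def by blast
  have X'co: "\<forall>x\<in>X'. x \<in> post G e1 \<or> co Cs Es G x e1"
  proof
    fix x assume x: "x \<in> X'"
    show "x \<in> post G e1 \<or> co Cs Es G x e1"
    proof (cases "x \<in> post G e1")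
      case False
      then have "co Cp Ep (Gp prec) x e1" using x X' pG by blast
      then show ?thesis using co_PN[OF _ e1(2)] X'P x Cp_def Ep_def by blast
    qed simp
  qed
  define sel where "sel p = (SOME c. c \<in> X' \<and> h c = p)" for p
  have sel: "sel p \<in> X' \<and> h (sel p) = p" if "p \<in> pre F t2" for p
  proof -
    have "\<exists>c. c \<in> X' \<and> h c = p" using X'(3) that by blast
    then show ?thesis unfolding sel_def by (rule someI_ex)
  qed
  define S where "S = sel ` pre F t2"
  define Y where "Y = S \<union> post G e1"
  have SX: "S \<subseteq> X'" using sel S_def by blast
  have finS: "finite S" using finP_sub[OF preF_P[OF t2]] S_def by simp
  have finpost: "finite (post G e1)"
    using bij_betw_finite[OF postbij[OF e1(1)]] finP_sub[OF postF_P[OF hE[OF e1(1)]]] by simp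
  have finY: "finite Y" using finS finpost Y_def by simp
  have YC: "Y \<subseteq> Cs" using SX X'C post_Cs[OF e1(1)] Y_def by blast
  have coY: "\<forall>x\<in>Y. \<forall>y\<in>Y. x \<noteq> y \<longrightarrow> co Cs Es G x y"
  proof (intro ballI impI)
    fix x y assume x: "x \<in> Y" and y: "y \<in> Y" and xy: "x \<noteq> y"
    have one: "co Cs Es G a b" if a: "a \<in> X'" and b: "b \<in> post G e1" and ab: "a \<noteq> b" for a b
    proof (cases "a \<in> post G e1")
      case True then show ?thesis using post_co[OF e1(1) True b ab] by simp
    next
      case False
      then have "co Cs Es G a e1" using X'co a by blast
      then show ?thesis using co_post[OF e1(1) _ _ b ab] X'C a by blast
    qed
    consider "x \<in> S" "y \<in> S" | "x \<in> S" "y \<in> post G e1" | "x \<in> post G e1" "y \<in> S"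
      | "x \<in> post G e1" "y \<in> post G e1" using x y Y_def by blast
    then show "co Cs Es G x y"
    proof cases
      case 1
      then have "co Cp Ep (Gp prec) x y" using X'(2) SX xy unfolding pairwise_co_def by blast
      then show ?thesis using co_PN X'P SX 1 Cp_def Ep_def by blast
    next
      case 2 then show ?thesis using one SX xy by blast
    next
      case 3 then show ?thesis using one SX xy co_sym by blast
    next
      case 4 then show ?thesis using post_co[OF e1(1)] xy by blast
    qed
  qed
  have pY: "post G e1 \<subseteq> Y" using Y_def by blast
  have pne': "post G e1 \<noteq> {}" using pne postbij[OF e1(1)] e1(3) by (auto simp: bij_betw_def)
  have coe: "\<forall>x\<in>Y - post G e1. co Cs Es G x e1" using X'co SX Y_def by blast
  have sub: "pre F t2 \<subseteq> h ` Y"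
  proof
    fix p assume p: "p \<in> pre F t2"
    then have "sel p \<in> Y" "h (sel p) = p" using sel[OF p] S_def Y_def by auto
    then show "p \<in> h ` Y" by (metis imageI)
  qed
  show ?thesis using tar_cuts[OF e1(1) finY YC coY pY pne' coe t2 sub] e1(3) by simp
qed

lemma sound: assumes x: "(t1, t2) \<in> improved T F Cs Es G h prec"
  shows "t1 \<in> T \<and> t2 \<in> T \<and> tar T F M0 t1 t2"
proof -
  have cases: "(t1 \<in> T \<and> t2 \<in> post_set F (post F t1) \<and>
          (early_confirm Cs Es G h prec (Es \<inter> PN prec) (Gp prec) t1 t2 \<or>
           check_by_cuts F h (Cs \<inter> PN prec) (Es \<inter> PN prec) (Gp prec) t1 t2)) \<or>
     (\<exists>e1 e2. t1 = h e1 \<and> t2 = h e2 \<and> e1 \<in> Es \<inter> PN prec \<and> e2 \<in> Es \<inter> PN prec \<and> e1 \<noteq> e2 \<and>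
        co (Cs \<inter> PN prec) (Es \<inter> PN prec) (Gp prec) e1 e2) \<or>
     (\<exists>e1 e2. t1 = h e2 \<and> t2 = h e1 \<and> e1 \<in> Es \<inter> PN prec \<and> e2 \<in> Es \<inter> PN prec \<and> e1 \<noteq> e2 \<and>
        co (Cs \<inter> PN prec) (Es \<inter> PN prec) (Gp prec) e1 e2)"
    using x unfolding improved_def Let_def by blast
  then show ?thesis
  proof (elim disjE)
    assume c1: "t1 \<in> T \<and> t2 \<in> post_set F (post F t1) \<and>
          (early_confirm Cs Es G h prec (Es \<inter> PN prec) (Gp prec) t1 t2 \<or>
           check_by_cuts F h (Cs \<inter> PN prec) (Es \<inter> PN prec) (Gp prec) t1 t2)"
    then have t1: "t1 \<in> T" and t2p: "t2 \<in> post_set F (post F t1)" by auto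
    obtain p where p: "p \<in> post F t1" "t2 \<in> post F p" using t2p by (auto simp: post_set_def)
    have pP: "p \<in> P" using postF_P[OF t1] p(1) by blast
    have t2: "t2 \<in> T" using p(2) pP Fsub PT by (auto simp: post_def)
    have pne: "post F t1 \<noteq> {}" using p by blast
    show ?thesis using c1 sound_early sound_cuts[OF _ t2 pne] t1 t2 by blast
  next
    assume "\<exists>e1 e2. t1 = h e1 \<and> t2 = h e2 \<and> e1 \<in> Es \<inter> PN prec \<and> e2 \<in> Es \<inter> PN prec \<and> e1 \<noteq> e2 \<and>
        co (Cs \<inter> PN prec) (Es \<inter> PN prec) (Gp prec) e1 e2"
    then obtain e1 e2 where a: "t1 = h e1" "t2 = h e2" "e1 \<in> Es \<inter> PN prec" "e2 \<in> Es \<inter> PN prec" "e1 \<noteq> e2"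
      "co (Cs \<inter> PN prec) (Es \<inter> PN prec) (Gp prec) e1 e2" by blast
    have "co Cs Es G e1 e2" using co_PN a by blast
    then show ?thesis using tar_co a hE by blast
  next
    assume "\<exists>e1 e2. t1 = h e2 \<and> t2 = h e1 \<and> e1 \<in> Es \<inter> PN prec \<and> e2 \<in> Es \<inter> PN prec \<and> e1 \<noteq> e2 \<and>
        co (Cs \<inter> PN prec) (Es \<inter> PN prec) (Gp prec) e1 e2"
    then obtain e1 e2 where a: "t1 = h e2" "t2 = h e1" "e1 \<in> Es \<inter> PN prec" "e2 \<in> Es \<inter> PN prec" "e1 \<noteq> e2"
      "co (Cs \<inter> PN prec) (Es \<inter> PN prec) (Gp prec) e1 e2" by blast
    have "co Cs Es G e2 e1" using co_PN a co_sym by blast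
    then show ?thesis using tar_co a hE by blast
  qed
qed

end

theorem proposition7:
  fixes P T :: "'a set" and F :: "('a \<times> 'a) set" and M0 :: "'a \<Rightarrow> nat"
    and Cs Es :: "'n set" and G :: "('n \<times> 'n) set" and h :: "'n \<Rightarrow> 'a"
    and prec :: "'n set \<Rightarrow> 'n set \<Rightarrow> bool"
  assumes "net_system P T F M0"
    and "one_safe T F M0"
    and "is_unfolding P T F M0 Cs Es G h"
    and "adequate_order Cs Es G h prec"
  shows "improved T F Cs Es G h prec = {(t1, t2). t1 \<in> T \<and> t2 \<in> T \<and> tar T F M0 t1 t2}"
proof -
  interpret u: unf P T F M0 Cs Es G h using assms(1-3) by unfold_locales
  show ?thesis
  proof
    show "improved T F Cs Es G h prec \<subseteq> {(t1, t2). t1 \<in> T \<and> t2 \<in> T \<and> tar T F M0 t1 t2}"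
      using u.sound by auto
    show "{(t1, t2). t1 \<in> T \<and> t2 \<in> T \<and> tar T F M0 t1 t2} \<subseteq> improved T F Cs Es G h prec"
      using u.complete_tar[OF assms(4)] by auto
  qed
qed



end
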